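(* Fix an integer $r\ge2$, $\varepsilon>0$, $\gamma=(\gamma_1,\dots,\gamma_r)$ with $\gamma_i\in(0,1)$, $\sum_i\gamma_i=1$, and $i^\star=\arg\max_i\gamma_i$; let $\tilde\varepsilon=\varepsilon\min_i\gamma_i$ and $\Psi=\left(\frac{\gamma_{i^\star}\log d}{d\,r^{r-1}(r-1)\prod_{i=1}^r\gamma_i}\right)^{1/(r-1)}$. Let $K\in\mathbb{N}$ be sufficiently large in terms of $r,\varepsilon,\gamma$, and let $a>0$ be a constant. Consider an interpolation path $A^{(0)},\dots,A^{(T)}$ for $\mathcal{H}(r,n,p)$, $p=d/n^{r-1}$, of length $T\le n^a$. If $d=d(\varepsilon,r,\gamma,K)$ is sufficiently large, then with probability $1-\exp(-\Omega(n))$ there is no sequence of subsets $S_1,\dots,S_K$ of the vertex set satisfying: (B1) for each $k\in[K]$ there exists $t_k\in\{0,\dots,T\}$ such that $S_k$ is an independent set in $A^{(t_k)}$; (B2) for each $k\in[K]$ and $i\in[r]$, $|S_k\cap V_i|\ge(1+\varepsilon)\gamma_i r n\Psi$; (B3) for $2\le k\le K$, $\big|S_k\setminus\bigcup_{j<k}S_j\big|\in\left[\frac{\tilde\varepsilon}{4}n\Psi,\ \frac{\tilde\varepsilon}{2}n\Psi\right]$.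
   Context: $\mathcal{H}(r,n,p)$: random $r$-uniform $r$-partite hypergraph with vertex set $[n]\times[r]$, parts $V_i=[n]\times\{i\}$, each $e\in V_1\times\cdots\times V_r$ an edge independently with probability $p$, encoded by $A\in\{0,1\}^m$, $m=n^r$, coordinates indexed by $[m]$ in a fixed order. Interpolation path of length $T$: $A^{(0)}\sim\mathcal{H}(r,n,p)$; for $1\le t\le T$, $A^{(t)}$ is obtained from $A^{(t-1)}$ by resampling coordinate $\sigma(t)\in[m]$, $\sigma(t)\equiv t\pmod m$, independently from $\mathrm{Ber}(p)$. An independent set in $A^{(t)}$ is a vertex set containing no edge of the hypergraph encoded by $A^{(t)}$. *)

theory Defs
  imports "HOL-Probability.Probability"
begin

text \<open>Conventions (0-based): vertex set is pairs (v,i) with v < n, i < r; part V_i is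
  {0..<n} x {i}. The m = n^r coordinates are j in {0..<n^r}; coordinate j encodes the edge
  whose vertex in part i is ((j div n^i) mod n, i). A hypergraph is A :: nat => bool
  (values outside {0..<m} are irrelevant).\<close>

definition edge_vertex :: "nat \<Rightarrow> nat \<Rightarrow> nat \<Rightarrow> nat" where
  "edge_vertex n j i = (j div n ^ i) mod n"

definition vertex_set :: "nat \<Rightarrow> nat \<Rightarrow> (nat \<times> nat) set" where
  "vertex_set n r = {0..<n} \<times> {0..<r}"

definition part :: "nat \<Rightarrow> nat \<Rightarrow> (nat \<times> nat) set" where
  "part n i = {0..<n} \<times> {i}"

definition independent_set :: "nat \<Rightarrow> nat \<Rightarrow> (nat \<Rightarrow> bool) \<Rightarrow> (nat \<times> nat) set \<Rightarrow> bool" where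
  "independent_set n r A S \<longleftrightarrow>
     S \<subseteq> vertex_set n r \<and>
     \<not> (\<exists>j < n ^ r. A j \<and> (\<forall>i < r. (edge_vertex n j i, i) \<in> S))"

text \<open>Interpolation path: A0 is the initial hypergraph, B t is the fresh Bernoulli value
  used at step t (1 <= t <= T); step t resamples coordinate sigma(t) = t mod m.\<close>

fun interp_path :: "nat \<Rightarrow> (nat \<Rightarrow> bool) \<Rightarrow> (nat \<Rightarrow> bool) \<Rightarrow> nat \<Rightarrow> (nat \<Rightarrow> bool)" where
  "interp_path m A0 B 0 = A0"
| "interp_path m A0 B (Suc t) = (interp_path m A0 B t)(Suc t mod m := B (Suc t))"

definition path_pmf :: "nat \<Rightarrow> nat \<Rightarrow> real \<Rightarrow> nat \<Rightarrow> ((nat \<Rightarrow> bool) \<times> (nat \<Rightarrow> bool)) pmf" where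
  "path_pmf n r p T =
     pair_pmf (Pi_pmf {0..<n ^ r} False (\<lambda>_. bernoulli_pmf p))
              (Pi_pmf {1..T} False (\<lambda>_. bernoulli_pmf p))"

definition Psi :: "nat \<Rightarrow> (nat \<Rightarrow> real) \<Rightarrow> real \<Rightarrow> real" where
  "Psi r \<gamma> d =
     ((Max (\<gamma> ` {0..<r}) * ln d) /
      (d * real r ^ (r - 1) * (real r - 1) * (\<Prod>i<r. \<gamma> i))) powr (1 / (real r - 1))"

definition bad_sequence_exists ::
  "nat \<Rightarrow> nat \<Rightarrow> real \<Rightarrow> (nat \<Rightarrow> real) \<Rightarrow> nat \<Rightarrow> real \<Rightarrow> nat \<Rightarrow>
   (nat \<Rightarrow> bool) \<Rightarrow> (nat \<Rightarrow> bool) \<Rightarrow> bool" where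
  "bad_sequence_exists n r \<epsilon> \<gamma> K d T A0 B \<longleftrightarrow>
     (let \<Psi> = Psi r \<gamma> d; \<epsilon>' = \<epsilon> * Min (\<gamma> ` {0..<r}) in
      \<exists>S :: nat \<Rightarrow> (nat \<times> nat) set.
        (\<forall>k\<in>{1..K}. S k \<subseteq> vertex_set n r) \<and>
        (\<forall>k\<in>{1..K}. \<exists>t\<le>T. independent_set n r (interp_path (n ^ r) A0 B t) (S k)) \<and>
        (\<forall>k\<in>{1..K}. \<forall>i<r.
           real (card (S k \<inter> part n i)) \<ge> (1 + \<epsilon>) * \<gamma> i * real r * real n * \<Psi>) \<and>
        (\<forall>k\<in>{2..K}.
           \<epsilon>' / 4 * real n * \<Psi> \<le> real (card (S k - (\<Union>j\<in>{1..<k}. S j))) \<and>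
           real (card (S k - (\<Union>j\<in>{1..<k}. S j))) \<le> \<epsilon>' / 2 * real n * \<Psi>))"

end

theory Submission
  imports Defs
begin


lemma ev_lt: "0 < n \<Longrightarrow> edge_vertex n e i < n"
  by (simp add: edge_vertex_def)

lemma ev_shift_low:
  assumes "a < n ^ r" "i < r"
  shows "edge_vertex n (a + n ^ r * b) i = edge_vertex n a i"
proof -
  obtain k where k: "r = Suc (i + k)" using less_imp_Suc_add[OF assms(2)] by blast
  have nr: "n ^ r = n ^ i * (n * n ^ k)" unfolding k by (simp add: power_add)
  show ?thesis
  proof (cases "n = 0")
    case True thus ?thesis using assms(1) unfolding k by simp
  next
    case False
    hence "n ^ i \<noteq> 0" by simp
    hence "(a + n ^ r * b) div n ^ i = n * (n ^ k * b) + a div n ^ i"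
      unfolding nr by (simp add: div_mult_self2 mult.assoc)
    thus ?thesis by (simp add: edge_vertex_def)
  qed
qed

lemma ev_shift_top:
  assumes "a < n ^ r" "b < n"
  shows "edge_vertex n (a + n ^ r * b) r = b"
proof -
  have "n > 0" using assms(2) by simp
  hence "n ^ r > 0" by simp
  hence "(a + n ^ r * b) div n ^ r = b" using assms(1) by simp
  thus ?thesis using assms(2) by (simp add: edge_vertex_def)
qed

definition edges_with :: "nat \<Rightarrow> nat \<Rightarrow> (nat \<Rightarrow> nat set) \<Rightarrow> nat set" where
  "edges_with n r Y = {e. e < n ^ r \<and> (\<forall>i<r. edge_vertex n e i \<in> Y i)}"

lemma edges_with_card:
  assumes "\<forall>i<r. Y i \<subseteq> {0..<n}"
  shows "card (edges_with n r Y) = (\<Prod>i<r. card (Y i))"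
  using assms
proof (induction r)
  case 0
  have "edges_with n 0 Y = {0}" by (auto simp: edges_with_def)
  thus ?case by simp
next
  case (Suc r)
  have IH: "card (edges_with n r Y) = (\<Prod>i<r. card (Y i))" using Suc by auto
  have Yr: "Y r \<subseteq> {0..<n}" using Suc.prems by auto
  have eq: "edges_with n (Suc r) Y = (\<lambda>(a,b). a + n ^ r * b) ` (edges_with n r Y \<times> Y r)"
  proof (intro set_eqI iffI)
    fix e assume e: "e \<in> edges_with n (Suc r) Y"
    hence el: "e < n ^ Suc r" by (simp add: edges_with_def)
    hence np: "n > 0" by (cases n) auto
    define a where "a = e mod n ^ r"
    define b where "b = e div n ^ r"
    have ea: "e = a + n ^ r * b" by (simp add: a_def b_def)
    have al: "a < n ^ r" using np by (simp add: a_def)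
    have bl: "b < n" using el np by (simp add: b_def less_mult_imp_div_less mult.commute)
    have "\<forall>i<r. edge_vertex n a i \<in> Y i"
    proof (intro allI impI)
      fix i assume ir: "i < r"
      hence "edge_vertex n e i \<in> Y i" using e by (simp add: edges_with_def)
      have "edge_vertex n e i = edge_vertex n a i" using ev_shift_low[OF al ir, of b] ea by simp
      thus "edge_vertex n a i \<in> Y i" using \<open>edge_vertex n e i \<in> Y i\<close> by simp
    qed
    hence "a \<in> edges_with n r Y" using al by (simp add: edges_with_def)
    moreover have "b \<in> Y r" using e ev_shift_top[OF al bl] ea by (auto simp: edges_with_def)
    ultimately show "e \<in> (\<lambda>(a,b). a + n ^ r * b) ` (edges_with n r Y \<times> Y r)"
      using ea by force
  next
    fix e assume "e \<in> (\<lambda>(a,b). a + n ^ r * b) ` (edges_with n r Y \<times> Y r)"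
    then obtain a b where ab: "a \<in> edges_with n r Y" "b \<in> Y r" "e = a + n ^ r * b" by auto
    have al: "a < n ^ r" using ab by (simp add: edges_with_def)
    have bl: "b < n" using ab Yr by auto
    have "e < n ^ Suc r"
    proof -
      have "a + n ^ r * b < n ^ r + n ^ r * b" using al by simp
      also have "\<dots> = n ^ r * (b + 1)" by simp
      also have "\<dots> \<le> n ^ r * n" using bl by (intro mult_le_mono2) simp
      finally show ?thesis using ab by (simp add: mult.commute)
    qed
    moreover have "\<forall>i<Suc r. edge_vertex n e i \<in> Y i"
    proof (intro allI impI)
      fix i assume "i < Suc r"
      thus "edge_vertex n e i \<in> Y i"
        using ab ev_shift_low[OF al] ev_shift_top[OF al bl]
        by (cases "i = r") (auto simp: edges_with_def)
    qed
    ultimately show "e \<in> edges_with n (Suc r) Y" by (simp add: edges_with_def)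
  qed
  have inj: "inj_on (\<lambda>(a,b). a + n ^ r * b) (edges_with n r Y \<times> Y r)"
  proof (rule inj_onI, clarify)
    fix a b a' b' assume h: "a \<in> edges_with n r Y" "b \<in> Y r" "a' \<in> edges_with n r Y" "b' \<in> Y r"
      "a + n ^ r * b = a' + n ^ r * b'"
    have al: "a < n ^ r" "a' < n ^ r" using h by (auto simp: edges_with_def)
    have "(a + n ^ r * b) mod n ^ r = a" "(a' + n ^ r * b') mod n ^ r = a'" using al by auto
    hence "a = a'" using h(5) by simp
    moreover have "n ^ r > 0" using al(1) by (cases "n ^ r") auto
    ultimately show "a = a' \<and> b = b'" using h(5) by auto
  qed
  have "card (edges_with n (Suc r) Y) = card (edges_with n r Y) * card (Y r)"
    unfolding eq by (simp add: card_image[OF inj] card_cartesian_product)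
  thus ?case using IH by simp
qed


lemma finite_vertex_set[simp]: "finite (vertex_set n r)"
  by (simp add: vertex_set_def)

lemma card_vertex_set: "card (vertex_set n r) = n * r"
  by (simp add: vertex_set_def card_cartesian_product)

lemma card_parts:
  assumes "W \<subseteq> vertex_set n r"
  shows "card W = (\<Sum>i<r. card (W \<inter> part n i))"
proof -
  have fin: "finite W" by (rule finite_subset[OF assms]) simp
  have "W = (\<Union>i<r. W \<inter> part n i)"
  proof (intro equalityI subsetI)
    fix x assume x: "x \<in> W"
    obtain a b where ab: "x = (a, b)" by (cases x)
    have "a < n" "b < r" using x ab assms by (auto simp: vertex_set_def)
    hence "x \<in> W \<inter> part n b" using x ab by (simp add: part_def)
    thus "x \<in> (\<Union>i<r. W \<inter> part n i)" using \<open>b < r\<close> by blast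
  qed blast
  hence "card W = card (\<Union>i<r. W \<inter> part n i)" by simp
  also have "\<dots> = (\<Sum>i<r. card (W \<inter> part n i))"
  proof (rule card_UN_disjoint)
    show "\<forall>i\<in>{..<r}. \<forall>j\<in>{..<r}. i \<noteq> j \<longrightarrow> W \<inter> part n i \<inter> (W \<inter> part n j) = {}"
      by (simp add: part_def) blast
  qed (use fin in auto)
  finally show ?thesis .
qed

definition slice :: "(nat \<times> nat) set \<Rightarrow> nat \<Rightarrow> nat set" where
  "slice X i = {v. (v, i) \<in> X}"

lemma card_slice:
  assumes "X \<subseteq> vertex_set n r"
  shows "card (slice X i) = card (X \<inter> part n i)"
proof -
  have "X \<inter> part n i = (\<lambda>v. (v, i)) ` slice X i"
  proof (intro equalityI subsetI)
    fix x assume x: "x \<in> X \<inter> part n i"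
    then obtain a where a: "x = (a, i)" by (auto simp: part_def)
    hence "a \<in> slice X i" using x by (simp add: slice_def)
    thus "x \<in> (\<lambda>v. (v, i)) ` slice X i" using a by blast
  next
    fix x assume x: "x \<in> (\<lambda>v. (v, i)) ` slice X i"
    then obtain a where a: "x = (a, i)" "(a, i) \<in> X" by (auto simp: slice_def)
    hence "a < n" using assms by (auto simp: vertex_set_def)
    thus "x \<in> X \<inter> part n i" using a by (simp add: part_def)
  qed
  moreover have "inj_on (\<lambda>v. (v, i)) (slice X i)" by (auto simp: inj_on_def)
  ultimately show ?thesis by (simp add: card_image)
qed

lemma slice_sub: "X \<subseteq> vertex_set n r \<Longrightarrow> slice X i \<subseteq> {0..<n}"
  by (auto simp: slice_def vertex_set_def)

definition cross_edges :: "nat \<Rightarrow> nat \<Rightarrow> (nat \<times> nat) set \<Rightarrow> (nat \<times> nat) set \<Rightarrow> nat set" where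
  "cross_edges n r X W = {e. e < n ^ r \<and> (\<exists>i<r. (edge_vertex n e i, i) \<in> X \<and>
       (\<forall>i'<r. i' \<noteq> i \<longrightarrow> (edge_vertex n e i', i') \<in> W))}"

lemma finite_cross_edges[simp]: "finite (cross_edges n r X W)"
  by (rule finite_subset[of _ "{..<n^r}"]) (auto simp: cross_edges_def)

lemma cross_card:
  assumes X: "X \<subseteq> vertex_set n r" and W: "W \<subseteq> vertex_set n r" and d: "X \<inter> W = {}"
  shows "card (cross_edges n r X W) =
     (\<Sum>i<r. card (X \<inter> part n i) * (\<Prod>i'\<in>{..<r}-{i}. card (W \<inter> part n i')))"
proof -
  define Yi where "Yi = (\<lambda>i i'. if i' = i then slice X i else slice W i')"
  have eq: "cross_edges n r X W = (\<Union>i<r. edges_with n r (Yi i))"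
    by (auto simp: cross_edges_def edges_with_def Yi_def slice_def)
  have "card (\<Union>i<r. edges_with n r (Yi i)) = (\<Sum>i<r. card (edges_with n r (Yi i)))"
  proof (rule card_UN_disjoint)
    show "finite {..<r}" by simp
    show "\<forall>i\<in>{..<r}. finite (edges_with n r (Yi i))"
      by (auto intro: finite_subset[of _ "{..<n^r}"] simp: edges_with_def)
    show "\<forall>i\<in>{..<r}. \<forall>j\<in>{..<r}. i \<noteq> j \<longrightarrow> edges_with n r (Yi i) \<inter> edges_with n r (Yi j) = {}"
    proof (intro ballI impI)
      fix i j assume ij: "i \<in> {..<r}" "j \<in> {..<r}" "i \<noteq> j"
      show "edges_with n r (Yi i) \<inter> edges_with n r (Yi j) = {}"
      proof (rule ccontr)
        assume "edges_with n r (Yi i) \<inter> edges_with n r (Yi j) \<noteq> {}"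
        then obtain e where e: "e \<in> edges_with n r (Yi i)" "e \<in> edges_with n r (Yi j)" by blast
        have "edge_vertex n e i \<in> slice X i" using e(1) ij by (auto simp: edges_with_def Yi_def)
        moreover have "edge_vertex n e i \<in> slice W i" using e(2) ij by (auto simp: edges_with_def Yi_def)
        ultimately show False using d by (auto simp: slice_def)
      qed
    qed
  qed
  also have "\<dots> = (\<Sum>i<r. card (X \<inter> part n i) * (\<Prod>i'\<in>{..<r}-{i}. card (W \<inter> part n i')))"
  proof (rule sum.cong[OF refl])
    fix i assume i: "i \<in> {..<r}"
    have "\<forall>i'<r. Yi i i' \<subseteq> {0..<n}" using slice_sub[OF X] slice_sub[OF W] by (auto simp: Yi_def)
    hence "card (edges_with n r (Yi i)) = (\<Prod>i'<r. card (Yi i i'))" by (rule edges_with_card)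
    also have "\<dots> = card (Yi i i) * (\<Prod>i'\<in>{..<r}-{i}. card (Yi i i'))"
      using i by (subst prod.remove[of "{..<r}" i]) auto
    also have "\<dots> = card (X \<inter> part n i) * (\<Prod>i'\<in>{..<r}-{i}. card (W \<inter> part n i'))"
      by (simp add: Yi_def card_slice[OF X] card_slice[OF W])
    finally show "card (edges_with n r (Yi i)) = card (X \<inter> part n i) * (\<Prod>i'\<in>{..<r}-{i}. card (W \<inter> part n i'))" .
  qed
  finally show ?thesis using eq by simp
qed

lemma cross_lower:
  fixes p lam :: real and \<rho> :: "nat \<Rightarrow> real"
  assumes X: "X \<subseteq> vertex_set n r" and W: "W \<subseteq> vertex_set n r" and d: "X \<inter> W = {}"
    and p: "p \<ge> 0"
    and lam: "\<forall>i<r. lam \<le> p * (\<Prod>i'\<in>{..<r}-{i}. \<rho> i')"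
    and rho: "\<forall>i'<r. 0 \<le> \<rho> i' \<and> \<rho> i' \<le> real (card (W \<inter> part n i'))"
  shows "lam * real (card X) \<le> p * real (card (cross_edges n r X W))"
proof -
  have "lam * real (card X) = (\<Sum>i<r. real (card (X \<inter> part n i)) * lam)"
    by (simp add: card_parts[OF X] sum_distrib_left mult.commute)
  also have "\<dots> \<le> (\<Sum>i<r. real (card (X \<inter> part n i)) * (p * (\<Prod>i'\<in>{..<r}-{i}. real (card (W \<inter> part n i')))))"
  proof (rule sum_mono)
    fix i assume i: "i \<in> {..<r}"
    have "(\<Prod>i'\<in>{..<r}-{i}. \<rho> i') \<le> (\<Prod>i'\<in>{..<r}-{i}. real (card (W \<inter> part n i')))"
      by (rule prod_mono) (use rho in auto)
    hence "lam \<le> p * (\<Prod>i'\<in>{..<r}-{i}. real (card (W \<inter> part n i')))"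
      using lam i p by (meson lessThan_iff mult_left_mono order_trans)
    thus "real (card (X \<inter> part n i)) * lam \<le> real (card (X \<inter> part n i)) * (p * (\<Prod>i'\<in>{..<r}-{i}. real (card (W \<inter> part n i'))))"
      by (rule mult_left_mono) simp
  qed
  also have "\<dots> = p * real (card (cross_edges n r X W))"
    by (simp add: cross_card[OF X W d] sum_distrib_left algebra_simps)
  finally show ?thesis .
qed


fun lastres :: "nat \<Rightarrow> nat \<Rightarrow> nat \<Rightarrow> nat option" where
  "lastres m 0 e = None"
| "lastres m (Suc t) e = (if Suc t mod m = e then Some (Suc t) else lastres m t e)"

lemma interp_lastres:
  "interp_path m A0 B t e = (case lastres m t e of None \<Rightarrow> A0 e | Some s \<Rightarrow> B s)"
  by (induction t) auto

lemma lastres_Some: "lastres m t e = Some s \<Longrightarrow> 1 \<le> s \<and> s \<le> t \<and> s mod m = e"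
  by (induction t) (auto split: if_splits)

lemma prob_bern_False:
  assumes "0 \<le> p" "p \<le> 1"
  shows "measure_pmf.prob (bernoulli_pmf p) {False} = 1 - p"
  using assms by (simp add: measure_pmf_single)

lemma prob_Pi_avoid:
  fixes p :: real
  assumes "finite I" "J \<subseteq> I" "0 \<le> p" "p \<le> 1"
  shows "measure_pmf.prob (Pi_pmf I False (\<lambda>_. bernoulli_pmf p)) {f. \<forall>x\<in>J. \<not> f x} = (1 - p) ^ card J"
proof -
  have eq: "{f. \<forall>x\<in>J. \<not> f x} = Pi I (\<lambda>x. if x \<in> J then {False} else UNIV)"
    using assms(2) by (auto simp: Pi_def)
  have "measure_pmf.prob (Pi_pmf I False (\<lambda>_. bernoulli_pmf p)) {f. \<forall>x\<in>J. \<not> f x}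
      = (\<Prod>x\<in>I. measure_pmf.prob (bernoulli_pmf p) (if x \<in> J then {False} else UNIV))"
    unfolding eq by (rule measure_Pi_pmf_Pi) (rule assms(1))
  also have "\<dots> = (\<Prod>x\<in>I. if x \<in> J then 1 - p else 1)"
    by (rule prod.cong[OF refl]) (simp add: prob_bern_False[OF assms(3,4)])
  also have "\<dots> = (1 - p) ^ card J"
    using assms(1,2) by (simp add: prod.If_cases Int_absorb1 Int_def[symmetric])
  finally show ?thesis .
qed

lemma pair_prob:
  "measure_pmf.prob (pair_pmf M N) (A \<times> B) = measure_pmf.prob M A * measure_pmf.prob N B"
proof -
  have "measure_pmf.prob (pair_pmf M N) (A \<times> B) = measure_pmf.prob (pair_pmf M N) ((A \<times> B) \<inter> set_pmf (pair_pmf M N))"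
    by (rule measure_Int_set_pmf[symmetric])
  also have "(A \<times> B) \<inter> set_pmf (pair_pmf M N) = (A \<inter> set_pmf M) \<times> (B \<inter> set_pmf N)"
    by auto
  also have "measure_pmf.prob (pair_pmf M N) \<dots> = measure_pmf.prob M (A \<inter> set_pmf M) * measure_pmf.prob N (B \<inter> set_pmf N)"
    by (rule measure_pmf_prob_product) auto
  also have "\<dots> = measure_pmf.prob M A * measure_pmf.prob N B"
    by (simp add: measure_Int_set_pmf)
  finally show ?thesis .
qed

lemma path_prob:
  fixes p :: real
  assumes m: "0 < m" and E: "E \<subseteq> {0..<m}" and tau: "\<forall>e\<in>E. \<tau> e \<le> T" and p: "0 \<le> p" "p \<le> 1"
  shows "measure_pmf.prob (pair_pmf (Pi_pmf {0..<m} False (\<lambda>_. bernoulli_pmf p)) (Pi_pmf {1..T} False (\<lambda>_. bernoulli_pmf p)))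
           {(A0, B). \<forall>e\<in>E. \<not> interp_path m A0 B (\<tau> e) e} = (1 - p) ^ card E"
proof -
  define E0 where "E0 = {e\<in>E. lastres m (\<tau> e) e = None}"
  define E1 where "E1 = E - E0"
  define g where "g = (\<lambda>e. the (lastres m (\<tau> e) e))"
  have finE: "finite E" by (rule finite_subset[OF E]) simp
  have E1s: "\<And>e. e \<in> E1 \<Longrightarrow> lastres m (\<tau> e) e = Some (g e)"
    by (auto simp: E1_def E0_def g_def)
  have gprop: "\<And>e. e \<in> E1 \<Longrightarrow> 1 \<le> g e \<and> g e \<le> T \<and> g e mod m = e"
    using E1s lastres_Some tau by (metis DiffD1 E1_def order_trans)
  have seteq: "{(A0, B). \<forall>e\<in>E. \<not> interp_path m A0 B (\<tau> e) e}
      = {A0. \<forall>e\<in>E0. \<not> A0 e} \<times> {B. \<forall>s\<in>g ` E1. \<not> B s}"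
  proof (intro set_eqI iffI)
    fix x assume "x \<in> {(A0, B). \<forall>e\<in>E. \<not> interp_path m A0 B (\<tau> e) e}"
    then obtain A0 B where x: "x = (A0, B)" "\<forall>e\<in>E. \<not> interp_path m A0 B (\<tau> e) e" by auto
    have "\<forall>e\<in>E0. \<not> A0 e"
      using x(2) by (auto simp: E0_def interp_lastres)
    moreover have "\<forall>s\<in>g ` E1. \<not> B s"
    proof
      fix s assume "s \<in> g ` E1"
      then obtain e where e: "e \<in> E1" "s = g e" by auto
      have "\<not> interp_path m A0 B (\<tau> e) e" using x(2) e(1) by (auto simp: E1_def)
      thus "\<not> B s" using E1s[OF e(1)] e(2) by (simp add: interp_lastres)
    qed
    ultimately show "x \<in> {A0. \<forall>e\<in>E0. \<not> A0 e} \<times> {B. \<forall>s\<in>g ` E1. \<not> B s}" using x(1) by auto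
  next
    fix x assume "x \<in> {A0. \<forall>e\<in>E0. \<not> A0 e} \<times> {B. \<forall>s\<in>g ` E1. \<not> B s}"
    then obtain A0 B where x: "x = (A0, B)" "\<forall>e\<in>E0. \<not> A0 e" "\<forall>s\<in>g ` E1. \<not> B s" by auto
    have "\<forall>e\<in>E. \<not> interp_path m A0 B (\<tau> e) e"
    proof
      fix e assume e: "e \<in> E"
      show "\<not> interp_path m A0 B (\<tau> e) e"
      proof (cases "e \<in> E0")
        case True thus ?thesis using x(2) by (auto simp: E0_def interp_lastres)
      next
        case False
        hence "e \<in> E1" using e by (simp add: E1_def)
        thus ?thesis using x(3) E1s by (auto simp: interp_lastres)
      qed
    qed
    thus "x \<in> {(A0, B). \<forall>e\<in>E. \<not> interp_path m A0 B (\<tau> e) e}" using x(1) by auto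
  qed
  have inj: "inj_on g E1"
    by (rule inj_onI) (metis gprop)
  have gsub: "g ` E1 \<subseteq> {1..T}" using gprop by auto
  have E0sub: "E0 \<subseteq> {0..<m}" using E by (auto simp: E0_def)
  have cardE: "card E = card E0 + card E1"
  proof -
    have "E = E0 \<union> E1" "E0 \<inter> E1 = {}" by (auto simp: E0_def E1_def)
    moreover have "finite E0" "finite E1" using finE by (auto simp: E0_def E1_def)
    ultimately show ?thesis by (metis card_Un_disjoint)
  qed
  show ?thesis
    unfolding seteq pair_prob
    using prob_Pi_avoid[OF _ E0sub p, of] prob_Pi_avoid[OF _ gsub p] card_image[OF inj] cardE
    by (simp add: power_add)
qed


lemma sum_pow_card_Pow:
  fixes y :: real
  assumes "finite S"
  shows "(\<Sum>A\<in>Pow S. y ^ card A) = (1 + y) ^ card S"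
  using assms
proof (induction S rule: finite_induct)
  case empty thus ?case by simp
next
  case (insert x S)
  have disj: "Pow S \<inter> insert x ` Pow S = {}" using insert.hyps(2) by auto
  have inj: "inj_on (insert x) (Pow S)"
    by (rule inj_onI) (use insert.hyps(2) in \<open>auto simp: insert_ident\<close>)
  have fin: "finite (Pow S)" "finite (insert x ` Pow S)" using insert.hyps(1) by auto
  have "(\<Sum>A\<in>Pow (insert x S). y ^ card A) = (\<Sum>A\<in>Pow S. y ^ card A) + (\<Sum>A\<in>insert x ` Pow S. y ^ card A)"
    unfolding Pow_insert by (rule sum.union_disjoint[OF fin disj])
  also have "(\<Sum>A\<in>insert x ` Pow S. y ^ card A) = (\<Sum>A\<in>Pow S. y ^ card (insert x A))"
    by (rule sum.reindex[OF inj, unfolded comp_def])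
  also have "\<dots> = (\<Sum>A\<in>Pow S. y * y ^ card A)"
  proof (rule sum.cong[OF refl])
    fix A assume "A \<in> Pow S"
    hence "finite A" "x \<notin> A" using insert.hyps finite_subset by auto
    thus "y ^ card (insert x A) = y * y ^ card A" by simp
  qed
  also have "(\<Sum>A\<in>Pow S. y ^ card A) + (\<Sum>A\<in>Pow S. y * y ^ card A) = (1 + y) * (\<Sum>A\<in>Pow S. y ^ card A)"
    by (simp add: distrib_right sum_distrib_left sum.distrib)
  finally show ?case using insert by simp
qed

lemma card_small_family:
  fixes y :: real
  assumes "finite V" "0 < y" "y \<le> 1"
  shows "real (card {W\<in>Pow V. card W \<le> M}) \<le> (1 + y) ^ card V / y ^ M"
proof -
  have "real (card {W\<in>Pow V. card W \<le> M}) * y ^ M = (\<Sum>W\<in>{W\<in>Pow V. card W \<le> M}. y ^ M)"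
    by simp
  also have "\<dots> \<le> (\<Sum>W\<in>{W\<in>Pow V. card W \<le> M}. y ^ card W)"
    by (rule sum_mono) (use assms in \<open>auto intro: power_decreasing\<close>)
  also have "\<dots> \<le> (\<Sum>W\<in>Pow V. y ^ card W)"
    by (rule sum_mono2) (use assms in auto)
  also have "\<dots> = (1 + y) ^ card V" by (rule sum_pow_card_Pow[OF assms(1)])
  finally show ?thesis using assms by (simp add: pos_le_divide_eq)
qed

lemma gf_large:
  fixes y z nu :: real
  assumes "finite V" "0 < z" "z \<le> y"
  shows "(\<Sum>N\<in>{N\<in>Pow V. nu \<le> real (card N)}. z ^ card N) \<le> (z / y) powr nu * (1 + y) ^ card V"
proof -
  have y: "0 < y" using assms by simp
  have zy: "0 < z / y" "z / y \<le> 1" using assms y by auto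
  have "(\<Sum>N\<in>{N\<in>Pow V. nu \<le> real (card N)}. z ^ card N)
      \<le> (\<Sum>N\<in>{N\<in>Pow V. nu \<le> real (card N)}. (z / y) powr nu * y ^ card N)"
  proof (rule sum_mono)
    fix N assume N: "N \<in> {N\<in>Pow V. nu \<le> real (card N)}"
    have "z ^ card N = (z / y) ^ card N * y ^ card N" using y by (simp add: power_divide)
    also have "(z / y) ^ card N = (z / y) powr real (card N)" using zy by (simp add: powr_realpow)
    also have "\<dots> \<le> (z / y) powr nu" using N zy by (intro powr_mono') auto
    finally show "z ^ card N \<le> (z / y) powr nu * y ^ card N"
      using y by (simp add: mult_right_mono)
  qed
  also have "\<dots> = (z / y) powr nu * (\<Sum>N\<in>{N\<in>Pow V. nu \<le> real (card N)}. y ^ card N)"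
    by (simp add: sum_distrib_left)
  also have "\<dots> \<le> (z / y) powr nu * (\<Sum>N\<in>Pow V. y ^ card N)"
    by (intro mult_left_mono sum_mono2) (use assms y in auto)
  also have "\<dots> = (z / y) powr nu * (1 + y) ^ card V" by (simp add: sum_pow_card_Pow[OF assms(1)])
  finally show ?thesis .
qed


definition UW :: "(nat \<times> nat) set \<Rightarrow> (nat \<times> nat) set \<Rightarrow> (nat \<Rightarrow> (nat \<times> nat) set) \<Rightarrow> nat \<Rightarrow> (nat \<times> nat) set" where
  "UW W0 X N k = W0 \<union> X \<union> (\<Union>j\<in>{2..<k}. N j)"

definition valid :: "nat \<Rightarrow> nat \<Rightarrow> nat \<Rightarrow> (nat \<Rightarrow> real) \<Rightarrow> nat \<Rightarrow> real \<Rightarrow> (nat \<times> nat) set \<Rightarrow> (nat \<times> nat) set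
    \<Rightarrow> (nat \<Rightarrow> (nat \<times> nat) set) \<Rightarrow> (nat \<Rightarrow> (nat \<times> nat) set) \<Rightarrow> bool" where
  "valid n r K \<rho> M nu W0 X N Q \<longleftrightarrow>
     W0 \<subseteq> vertex_set n r \<and> card W0 \<le> M \<and> (\<forall>i<r. \<rho> i \<le> real (card (W0 \<inter> part n i))) \<and>
     X \<subseteq> vertex_set n r \<and> X \<inter> W0 = {} \<and>
     (\<forall>k\<in>{2..K}. N k \<subseteq> vertex_set n r \<and> nu \<le> real (card (N k)) \<and> N k \<inter> UW W0 X N k = {} \<and>
        Q k \<subseteq> UW W0 X N k \<and> (\<forall>i<r. \<rho> i \<le> real (card (Q k \<inter> part n i))))"

definition Ev :: "nat \<Rightarrow> nat \<Rightarrow> nat \<Rightarrow> (nat \<Rightarrow> nat) \<Rightarrow> (nat \<times> nat) set \<Rightarrow> (nat \<times> nat) set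
    \<Rightarrow> (nat \<Rightarrow> (nat \<times> nat) set) \<Rightarrow> (nat \<Rightarrow> (nat \<times> nat) set) \<Rightarrow> ((nat \<Rightarrow> bool) \<times> (nat \<Rightarrow> bool)) set" where
  "Ev n r K t W0 X N Q = {(A0, B).
     (\<forall>e\<in>cross_edges n r X W0. \<not> interp_path (n ^ r) A0 B (t 1) e) \<and>
     (\<forall>k\<in>{2..K}. \<forall>e\<in>cross_edges n r (N k) (Q k). \<not> interp_path (n ^ r) A0 B (t k) e)}"

lemma cross_vertices: "e \<in> cross_edges n r X W \<Longrightarrow> i < r \<Longrightarrow> (edge_vertex n e i, i) \<in> X \<union> W"
  unfolding cross_edges_def by (cases "\<exists>j<r. j = i") auto

lemma cross_some: "e \<in> cross_edges n r X W \<Longrightarrow> \<exists>i<r. (edge_vertex n e i, i) \<in> X"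
  unfolding cross_edges_def by blast

lemma cross_lt: "e \<in> cross_edges n r X W \<Longrightarrow> e < n ^ r"
  unfolding cross_edges_def by blast

lemma UW_mono: "j \<le> k \<Longrightarrow> UW W0 X N j \<subseteq> UW W0 X N k"
  unfolding UW_def by auto

lemma valid_sub:
  assumes "valid n r K \<rho> M nu W0 X N Q" "k \<in> {2..K}"
  shows "UW W0 X N k \<subseteq> vertex_set n r" "Q k \<subseteq> vertex_set n r" "N k \<inter> Q k = {}"
proof -
  have "\<forall>j\<in>{2..<k}. N j \<subseteq> vertex_set n r" using assms by (auto simp: valid_def)
  thus u: "UW W0 X N k \<subseteq> vertex_set n r" using assms(1) unfolding UW_def valid_def by blast
  have "Q k \<subseteq> UW W0 X N k" using assms by (simp add: valid_def)
  thus "Q k \<subseteq> vertex_set n r" using u by blast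
  have "N k \<inter> UW W0 X N k = {}" "Q k \<subseteq> UW W0 X N k" using assms by (simp_all add: valid_def)
  thus "N k \<inter> Q k = {}" by blast
qed

lemma Ek_disj:
  assumes v: "valid n r K \<rho> M nu W0 X N Q" and jk: "j < k" "j \<in> {2..K}" "k \<in> {2..K}"
  shows "cross_edges n r (N j) (Q j) \<inter> cross_edges n r (N k) (Q k) = {}"
proof (rule ccontr)
  assume "cross_edges n r (N j) (Q j) \<inter> cross_edges n r (N k) (Q k) \<noteq> {}"
  then obtain e where e: "e \<in> cross_edges n r (N j) (Q j)" "e \<in> cross_edges n r (N k) (Q k)" by blast
  obtain i where i: "i < r" "(edge_vertex n e i, i) \<in> N k" using cross_some[OF e(2)] by blast
  have "(edge_vertex n e i, i) \<in> N j \<union> Q j" using cross_vertices[OF e(1) i(1)] .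
  moreover have "N j \<subseteq> UW W0 X N k" using jk unfolding UW_def by auto
  moreover have "Q j \<subseteq> UW W0 X N j" using v jk(2) by (simp add: valid_def)
  hence "Q j \<subseteq> UW W0 X N k" using jk UW_mono[of j k W0 X N] by simp
  ultimately have "(edge_vertex n e i, i) \<in> UW W0 X N k" by blast
  thus False using i(2) v jk by (auto simp: valid_def)
qed

lemma E1_disj:
  assumes v: "valid n r K \<rho> M nu W0 X N Q" and k: "k \<in> {2..K}"
  shows "cross_edges n r X W0 \<inter> cross_edges n r (N k) (Q k) = {}"
proof (rule ccontr)
  assume "cross_edges n r X W0 \<inter> cross_edges n r (N k) (Q k) \<noteq> {}"
  then obtain e where e: "e \<in> cross_edges n r X W0" "e \<in> cross_edges n r (N k) (Q k)" by blast
  obtain i where i: "i < r" "(edge_vertex n e i, i) \<in> N k" using cross_some[OF e(2)] by blast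
  have "(edge_vertex n e i, i) \<in> X \<union> W0" using cross_vertices[OF e(1) i(1)] .
  hence "(edge_vertex n e i, i) \<in> UW W0 X N k" unfolding UW_def by blast
  thus False using i(2) v k by (auto simp: valid_def)
qed

lemma one_minus_le_exp: "(1 - p) ^ c \<le> exp (- p * real c)" if "0 \<le> p" "p \<le> 1" for p :: real
proof -
  have "(1 - p) ^ c \<le> exp (- p) ^ c"
    by (rule power_mono) (use that exp_ge_add_one_self[of "-p"] in auto)
  also have "\<dots> = exp (- p * real c)" by (simp add: exp_of_nat_mult[symmetric] mult.commute)
  finally show ?thesis .
qed

lemma witness_prob:
  fixes p lam :: real
  assumes n: "0 < n" and p: "0 \<le> p" "p \<le> 1"
    and v: "valid n r K \<rho> M nu W0 X N Q"
    and t: "\<forall>k\<in>{1..K}. t k \<le> T" and K: "1 \<le> K"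
    and lam: "\<forall>i<r. lam \<le> p * (\<Prod>i'\<in>{..<r}-{i}. \<rho> i')"
    and rho0: "\<forall>i<r. 0 \<le> \<rho> i"
  shows "measure_pmf.prob (path_pmf n r p T) (Ev n r K t W0 X N Q)
          \<le> exp (- lam * (real (card X) + (\<Sum>k\<in>{2..K}. real (card (N k)))))"
proof -
  define E1 where "E1 = cross_edges n r X W0"
  define Ek where "Ek = (\<lambda>k. cross_edges n r (N k) (Q k))"
  define E where "E = E1 \<union> (\<Union>k\<in>{2..K}. Ek k)"
  define \<tau> where "\<tau> = (\<lambda>e. if e \<in> E1 then t 1 else t (SOME k. k \<in> {2..K} \<and> e \<in> Ek k))"
  have Esub: "E \<subseteq> {0..<n ^ r}" unfolding E_def E1_def Ek_def using cross_lt by fastforce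
  have tauT: "\<forall>e\<in>E. \<tau> e \<le> T"
  proof
    fix e assume e: "e \<in> E"
    show "\<tau> e \<le> T"
    proof (cases "e \<in> E1")
      case True thus ?thesis using t K by (simp add: \<tau>_def)
    next
      case False
      hence "\<exists>k. k \<in> {2..K} \<and> e \<in> Ek k" using e by (auto simp: E_def)
      hence "(SOME k. k \<in> {2..K} \<and> e \<in> Ek k) \<in> {2..K}" by (metis (mono_tags, lifting) someI_ex)
      thus ?thesis using t False by (simp add: \<tau>_def)
    qed
  qed
  have sub: "Ev n r K t W0 X N Q \<subseteq> {(A0, B). \<forall>e\<in>E. \<not> interp_path (n ^ r) A0 B (\<tau> e) e}"
  proof (clarify)
    fix A0 B e assume ev: "(A0, B) \<in> Ev n r K t W0 X N Q" and e: "e \<in> E"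
      and ip: "interp_path (n ^ r) A0 B (\<tau> e) e"
    show False
    proof (cases "e \<in> E1")
      case True thus False using ev ip by (simp add: Ev_def E1_def \<tau>_def)
    next
      case False
      hence "\<exists>k. k \<in> {2..K} \<and> e \<in> Ek k" using e by (auto simp: E_def)
      hence sk: "(SOME k. k \<in> {2..K} \<and> e \<in> Ek k) \<in> {2..K} \<and> e \<in> Ek (SOME k. k \<in> {2..K} \<and> e \<in> Ek k)"
        by (rule someI_ex)
      thus False using ev ip False by (auto simp: Ev_def Ek_def \<tau>_def)
    qed
  qed
  have prob1: "measure_pmf.prob (path_pmf n r p T) (Ev n r K t W0 X N Q) \<le> (1 - p) ^ card E"
  proof -
    have "measure_pmf.prob (path_pmf n r p T) (Ev n r K t W0 X N Q)
        \<le> measure_pmf.prob (path_pmf n r p T) {(A0, B). \<forall>e\<in>E. \<not> interp_path (n ^ r) A0 B (\<tau> e) e}"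
      by (rule measure_pmf.finite_measure_mono[OF sub]) simp
    also have "\<dots> = (1 - p) ^ card E"
      unfolding path_pmf_def by (rule path_prob) (use n Esub tauT p in auto)
    finally show ?thesis .
  qed
  have finEk: "\<And>k. finite (Ek k)" by (simp add: Ek_def)
  have cardE: "card E = card E1 + (\<Sum>k\<in>{2..K}. card (Ek k))"
  proof -
    have "card (\<Union>k\<in>{2..K}. Ek k) = (\<Sum>k\<in>{2..K}. card (Ek k))"
    proof (rule card_UN_disjoint)
      show "\<forall>i\<in>{2..K}. \<forall>j\<in>{2..K}. i \<noteq> j \<longrightarrow> Ek i \<inter> Ek j = {}"
      proof (intro ballI impI)
        fix i j assume ij: "i \<in> {2..K}" "j \<in> {2..K}" "i \<noteq> j"
        show "Ek i \<inter> Ek j = {}"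
        proof (cases "i < j")
          case True thus ?thesis using Ek_disj[OF v True ij(1,2)] by (simp add: Ek_def)
        next
          case False hence "j < i" using ij(3) by simp
          thus ?thesis using Ek_disj[OF v _ ij(2,1)] by (auto simp: Ek_def)
        qed
      qed
    qed (use finEk in auto)
    moreover have "E1 \<inter> (\<Union>k\<in>{2..K}. Ek k) = {}" unfolding E1_def Ek_def using E1_disj[OF v] by blast
    moreover have "finite E1" "finite (\<Union>k\<in>{2..K}. Ek k)" using finEk by (auto simp: E1_def)
    ultimately show ?thesis unfolding E_def by (simp add: card_Un_disjoint)
  qed
  have low1: "lam * real (card X) \<le> p * real (card E1)"
    unfolding E1_def
    by (rule cross_lower) (use v p lam rho0 in \<open>auto simp: valid_def\<close>)
  have lowk: "\<And>k. k \<in> {2..K} \<Longrightarrow> lam * real (card (N k)) \<le> p * real (card (Ek k))"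
  proof -
    fix k assume k: "k \<in> {2..K}"
    show "lam * real (card (N k)) \<le> p * real (card (Ek k))"
      unfolding Ek_def
      by (rule cross_lower) (use v p lam rho0 k valid_sub[OF v k] in \<open>auto simp: valid_def\<close>)
  qed
  have "lam * (real (card X) + (\<Sum>k\<in>{2..K}. real (card (N k))))
      = lam * real (card X) + (\<Sum>k\<in>{2..K}. lam * real (card (N k)))"
    by (simp add: distrib_left sum_distrib_left)
  also have "\<dots> \<le> p * real (card E1) + (\<Sum>k\<in>{2..K}. p * real (card (Ek k)))"
    by (intro add_mono low1 sum_mono lowk)
  also have "\<dots> = p * real (card E)"
    by (simp add: cardE distrib_left sum_distrib_left)
  finally have key: "lam * (real (card X) + (\<Sum>k\<in>{2..K}. real (card (N k)))) \<le> p * real (card E)" .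
  have "(1 - p) ^ card E \<le> exp (- p * real (card E))" by (rule one_minus_le_exp[OF p])
  also have "\<dots> \<le> exp (- lam * (real (card X) + (\<Sum>k\<in>{2..K}. real (card (N k)))))"
    using key by simp
  finally show ?thesis using prob1 by linarith
qed


lemma union_decomp:
  "(\<Union>j\<in>{1..<Suc (Suc i)}. S j) = S 1 \<union> (\<Union>j\<in>{2..<Suc (Suc i)}. S j - (\<Union>l\<in>{1..<j}. S l))"
proof (induction i)
  case 0
  have "{1..<Suc (Suc 0)} = {1::nat}" by auto
  thus ?case by simp
next
  case (Suc i)
  have a: "{1..<Suc (Suc (Suc i))} = insert (Suc (Suc i)) {1..<Suc (Suc i)}" by auto
  have b: "{2..<Suc (Suc (Suc i))} = insert (Suc (Suc i)) {2..<Suc (Suc i)}" by auto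
  show ?case unfolding a b using Suc.IH by auto
qed

lemma union_decomp':
  fixes k :: nat
  assumes "2 \<le> k"
  shows "(\<Union>j\<in>{1..<k}. S j) = S 1 \<union> (\<Union>j\<in>{2..<k}. S j - (\<Union>l\<in>{1..<j}. S l))"
proof -
  obtain i where "k = Suc (Suc i)" using assms by (metis add_2_eq_Suc le_Suc_ex)
  thus ?thesis using union_decomp by simp
qed

lemma indep_edge:
  assumes "independent_set n r A S" "e < n ^ r" "\<forall>i<r. (edge_vertex n e i, i) \<in> S"
  shows "\<not> A e"
  using assms unfolding independent_set_def by blast

lemma extract_witness:
  fixes q \<rho> :: "nat \<Rightarrow> real" and nulo nuhi :: real
  assumes K: "1 \<le> K"
    and S1: "\<forall>k\<in>{1..K}. S k \<subseteq> vertex_set n r"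
    and S2: "\<forall>k\<in>{1..K}. \<exists>t\<le>T. independent_set n r (interp_path (n ^ r) A0 B t) (S k)"
    and S3: "\<forall>k\<in>{1..K}. \<forall>i<r. q i \<le> real (card (S k \<inter> part n i))"
    and S4: "\<forall>k\<in>{2..K}. nulo \<le> real (card (S k - (\<Union>j\<in>{1..<k}. S j))) \<and>
                         real (card (S k - (\<Union>j\<in>{1..<k}. S j))) \<le> nuhi"
    and rq: "\<forall>i<r. \<rho> i \<le> q i - nuhi" and nuhi: "0 \<le> nuhi"
    and M: "M = (\<Sum>i<r. nat \<lceil>q i\<rceil>)"
  shows "\<exists>t\<in>PiE {1..K} (\<lambda>_. {0..T}). \<exists>W0\<in>{W\<in>Pow (vertex_set n r). card W \<le> M}.
          \<exists>X\<in>Pow (vertex_set n r). \<exists>N\<in>PiE {2..K} (\<lambda>_. {N\<in>Pow (vertex_set n r). nulo \<le> real (card N)}).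
          \<exists>Q\<in>PiE {2..K} (\<lambda>_. Pow (W0 \<union> X \<union> (\<Union>j\<in>{2..K}. N j))).
            valid n r K \<rho> M nulo W0 X N Q \<and> (A0, B) \<in> Ev n r K t W0 X N Q"
proof -
  define V where "V = vertex_set n r"
  have S11: "S 1 \<subseteq> V" using S1 K by (simp add: V_def)
  have finS: "\<And>k. k \<in> {1..K} \<Longrightarrow> finite (S k)"
    using S1 by (metis finite_subset finite_vertex_set)
  define tf where "tf = (\<lambda>k. SOME t. t \<le> T \<and> independent_set n r (interp_path (n ^ r) A0 B t) (S k))"
  have tf: "\<And>k. k \<in> {1..K} \<Longrightarrow> tf k \<le> T \<and> independent_set n r (interp_path (n ^ r) A0 B (tf k)) (S k)"
  proof -
    fix k assume "k \<in> {1..K}"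
    hence "\<exists>t. t \<le> T \<and> independent_set n r (interp_path (n ^ r) A0 B t) (S k)" using S2 by blast
    thus "tf k \<le> T \<and> independent_set n r (interp_path (n ^ r) A0 B (tf k)) (S k)"
      unfolding tf_def by (rule someI_ex)
  qed
  define t where "t = restrict tf {1..K}"
  have tP: "t \<in> PiE {1..K} (\<lambda>_. {0..T})" using tf by (auto simp: t_def)
  have exY: "\<forall>i. \<exists>Y. i < r \<longrightarrow> Y \<subseteq> S 1 \<inter> part n i \<and> card Y = nat \<lceil>q i\<rceil>"
  proof (intro allI)
    fix i
    show "\<exists>Y. i < r \<longrightarrow> Y \<subseteq> S 1 \<inter> part n i \<and> card Y = nat \<lceil>q i\<rceil>"
    proof (cases "i < r")
      case True
      have "q i \<le> real (card (S 1 \<inter> part n i))" using S3 K True by auto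
      hence "\<lceil>q i\<rceil> \<le> int (card (S 1 \<inter> part n i))" by (simp add: ceiling_le_iff)
      hence "nat \<lceil>q i\<rceil> \<le> card (S 1 \<inter> part n i)" by linarith
      then obtain Y where "Y \<subseteq> S 1 \<inter> part n i" "card Y = nat \<lceil>q i\<rceil>"
        by (meson obtain_subset_with_card_n)
      thus ?thesis by blast
    qed simp
  qed
  then obtain Y where Y: "\<And>i. i < r \<Longrightarrow> Y i \<subseteq> S 1 \<inter> part n i \<and> card (Y i) = nat \<lceil>q i\<rceil>"
    by metis
  define W0 where "W0 = (\<Union>i<r. Y i)"
  have W0S: "W0 \<subseteq> S 1" using Y by (auto simp: W0_def)
  have W0V: "W0 \<subseteq> V" using W0S S11 by blast
  have cardW0: "card W0 \<le> M"
  proof -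
    have "card W0 \<le> (\<Sum>i<r. card (Y i))" unfolding W0_def by (rule card_UN_le) simp
    also have "\<dots> = M" using Y by (simp add: M)
    finally show ?thesis .
  qed
  have W0part: "\<And>i. i < r \<Longrightarrow> W0 \<inter> part n i = Y i"
  proof -
    fix i assume i: "i < r"
    have "\<And>j. j < r \<Longrightarrow> j \<noteq> i \<Longrightarrow> Y j \<inter> part n i = {}"
    proof -
      fix j assume "j < r" "j \<noteq> i"
      hence "Y j \<subseteq> part n j" using Y by blast
      thus "Y j \<inter> part n i = {}" using \<open>j \<noteq> i\<close> by (auto simp: part_def)
    qed
    moreover have "Y i \<subseteq> part n i" using Y i by blast
    ultimately show "W0 \<inter> part n i = Y i" unfolding W0_def using i by blast
  qed
  have W0rho: "\<forall>i<r. \<rho> i \<le> real (card (W0 \<inter> part n i))"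
  proof (intro allI impI)
    fix i assume i: "i < r"
    have "\<rho> i \<le> q i" using rq nuhi i by force
    also have "\<dots> \<le> real (nat \<lceil>q i\<rceil>)" by (rule real_nat_ceiling_ge)
    also have "\<dots> = real (card (W0 \<inter> part n i))" using W0part[OF i] Y[OF i] by simp
    finally show "\<rho> i \<le> real (card (W0 \<inter> part n i))" .
  qed
  define X where "X = S 1 - W0"
  have XV: "X \<subseteq> V" using S11 by (auto simp: X_def)
  have XW: "X \<inter> W0 = {}" by (auto simp: X_def)
  have WX: "W0 \<union> X = S 1" using W0S by (auto simp: X_def)
  define U where "U = (\<lambda>k. \<Union>j\<in>{1..<k}. S j)"
  define Nf where "Nf = (\<lambda>k. S k - U k)"
  define N where "N = restrict Nf {2..K}"
  define Q where "Q = restrict (\<lambda>k. S k \<inter> U k) {2..K}"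
  have UWeq: "\<And>k. k \<in> {2..K} \<Longrightarrow> UW W0 X N k = U k"
  proof -
    fix k assume k: "k \<in> {2..K}"
    have "U k = S 1 \<union> (\<Union>j\<in>{2..<k}. Nf j)"
      unfolding U_def Nf_def using union_decomp'[of k S] k by simp
    also have "(\<Union>j\<in>{2..<k}. Nf j) = (\<Union>j\<in>{2..<k}. N j)"
      using k by (auto simp: N_def)
    finally show "UW W0 X N k = U k" unfolding UW_def using WX by auto
  qed
  have NP: "N \<in> PiE {2..K} (\<lambda>_. {N\<in>Pow V. nulo \<le> real (card N)})"
  proof -
    have "\<And>k. k \<in> {2..K} \<Longrightarrow> Nf k \<subseteq> V \<and> nulo \<le> real (card (Nf k))"
      using S1 S4 by (force simp: Nf_def U_def V_def)
    thus ?thesis by (auto simp: N_def)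
  qed
  have validk: "\<forall>k\<in>{2..K}. N k \<subseteq> V \<and> nulo \<le> real (card (N k)) \<and> N k \<inter> UW W0 X N k = {} \<and>
        Q k \<subseteq> UW W0 X N k \<and> (\<forall>i<r. \<rho> i \<le> real (card (Q k \<inter> part n i)))"
  proof
    fix k assume k: "k \<in> {2..K}"
    have k1: "k \<in> {1..K}" using k by simp
    have Nk: "N k = S k - U k" "Q k = S k \<inter> U k" using k by (simp_all add: N_def Nf_def Q_def)
    have a: "N k \<subseteq> V \<and> nulo \<le> real (card (N k))" using NP k by auto
    have b: "N k \<inter> UW W0 X N k = {}" using UWeq[OF k] Nk by auto
    have c: "Q k \<subseteq> UW W0 X N k" using UWeq[OF k] Nk by auto
    have d: "\<forall>i<r. \<rho> i \<le> real (card (Q k \<inter> part n i))"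
    proof (intro allI impI)
      fix i assume i: "i < r"
      have fin: "finite (S k)" using finS[OF k1] .
      have "S k \<inter> part n i = (Q k \<inter> part n i) \<union> (N k \<inter> part n i)" using Nk by auto
      moreover have "(Q k \<inter> part n i) \<inter> (N k \<inter> part n i) = {}" using Nk by auto
      moreover have "finite (Q k \<inter> part n i)" "finite (N k \<inter> part n i)" using fin Nk by auto
      ultimately have "card (S k \<inter> part n i) = card (Q k \<inter> part n i) + card (N k \<inter> part n i)"
        by (simp add: card_Un_disjoint)
      moreover have "card (N k \<inter> part n i) \<le> card (N k)"
        by (rule card_mono) (use fin Nk in auto)
      moreover have "real (card (N k)) \<le> nuhi" using S4 k Nk by (simp add: U_def)
      moreover have "q i \<le> real (card (S k \<inter> part n i))" using S3 k1 i by blast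
      ultimately show "\<rho> i \<le> real (card (Q k \<inter> part n i))" using rq i by force
    qed
    show "N k \<subseteq> V \<and> nulo \<le> real (card (N k)) \<and> N k \<inter> UW W0 X N k = {} \<and>
        Q k \<subseteq> UW W0 X N k \<and> (\<forall>i<r. \<rho> i \<le> real (card (Q k \<inter> part n i)))"
      using a b c d by blast
  qed
  have v: "valid n r K \<rho> M nulo W0 X N Q"
    unfolding valid_def using W0V cardW0 W0rho XV XW validk by (simp add: V_def)
  have QP: "Q \<in> PiE {2..K} (\<lambda>_. Pow (W0 \<union> X \<union> (\<Union>j\<in>{2..K}. N j)))"
  proof -
    have "\<And>k. k \<in> {2..K} \<Longrightarrow> Q k \<subseteq> W0 \<union> X \<union> (\<Union>j\<in>{2..K}. N j)"
    proof -
      fix k assume k: "k \<in> {2..K}"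
      have "Q k \<subseteq> UW W0 X N k" using validk k by blast
      also have "\<dots> \<subseteq> W0 \<union> X \<union> (\<Union>j\<in>{2..K}. N j)" using k by (auto simp: UW_def)
      finally show "Q k \<subseteq> W0 \<union> X \<union> (\<Union>j\<in>{2..K}. N j)" .
    qed
    thus ?thesis by (auto simp: Q_def)
  qed
  have ev: "(A0, B) \<in> Ev n r K t W0 X N Q"
  proof -
    have e1: "\<forall>e\<in>cross_edges n r X W0. \<not> interp_path (n ^ r) A0 B (t 1) e"
    proof
      fix e assume e: "e \<in> cross_edges n r X W0"
      have "\<forall>i<r. (edge_vertex n e i, i) \<in> S 1" using cross_vertices[OF e] WX by blast
      moreover have "independent_set n r (interp_path (n ^ r) A0 B (t 1)) (S 1)"
        using tf[of 1] K by (simp add: t_def)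
      ultimately show "\<not> interp_path (n ^ r) A0 B (t 1) e"
        using indep_edge cross_lt[OF e] by blast
    qed
    have e2: "\<forall>k\<in>{2..K}. \<forall>e\<in>cross_edges n r (N k) (Q k). \<not> interp_path (n ^ r) A0 B (t k) e"
    proof (intro ballI)
      fix k e assume k: "k \<in> {2..K}" and e: "e \<in> cross_edges n r (N k) (Q k)"
      have k1: "k \<in> {1..K}" using k by simp
      have NQ: "N k \<union> Q k = S k" using k by (auto simp: N_def Nf_def Q_def)
      have "\<forall>i<r. (edge_vertex n e i, i) \<in> S k" using cross_vertices[OF e] NQ by blast
      moreover have "independent_set n r (interp_path (n ^ r) A0 B (t k)) (S k)"
        using tf[OF k1] k1 by (simp add: t_def)
      ultimately show "\<not> interp_path (n ^ r) A0 B (t k) e"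
        using indep_edge cross_lt[OF e] by blast
    qed
    show ?thesis using e1 e2 by (simp add: Ev_def)
  qed
  show ?thesis
    apply (rule bexI[OF _ tP])
    apply (rule bexI[of _ W0])
     apply (rule bexI[of _ X])
      apply (rule bexI[of _ N])
       apply (rule bexI[of _ Q])
    using v ev QP NP XV W0V cardW0 by (auto simp: V_def)
qed


definition Evv where
  "Evv n r K \<rho> M nu t W0 X N Q = (if valid n r K \<rho> M nu W0 X N Q then Ev n r K t W0 X N Q else {})"

lemma union_bound_pmf:
  "finite I \<Longrightarrow> measure_pmf.prob P (\<Union>i\<in>I. F i) \<le> (\<Sum>i\<in>I. measure_pmf.prob P (F i))"
  by (rule measure_UNION_le) auto

lemma nested_union_bound:
  fixes PT :: "'t set" and F0 :: "'w set" and PX :: "'x set" and PN :: "'n set" and PQ :: "'w \<Rightarrow> 'x \<Rightarrow> 'n \<Rightarrow> 'q set"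
  assumes fin: "finite PT" "finite F0" "finite PX" "finite PN" "\<And>W X N. W \<in> F0 \<Longrightarrow> X \<in> PX \<Longrightarrow> N \<in> PN \<Longrightarrow> finite (PQ W X N)"
    and sub: "Bad \<subseteq> (\<Union>t\<in>PT. \<Union>W\<in>F0. \<Union>X\<in>PX. \<Union>N\<in>PN. \<Union>Q\<in>PQ W X N. E t W X N Q)"
  shows "measure_pmf.prob P Bad \<le> (\<Sum>t\<in>PT. \<Sum>W\<in>F0. \<Sum>X\<in>PX. \<Sum>N\<in>PN. \<Sum>Q\<in>PQ W X N. measure_pmf.prob P (E t W X N Q))"
proof -
  have "measure_pmf.prob P Bad \<le> measure_pmf.prob P (\<Union>t\<in>PT. \<Union>W\<in>F0. \<Union>X\<in>PX. \<Union>N\<in>PN. \<Union>Q\<in>PQ W X N. E t W X N Q)"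
    by (rule measure_pmf.finite_measure_mono[OF sub]) simp
  also have "\<dots> \<le> (\<Sum>t\<in>PT. measure_pmf.prob P (\<Union>W\<in>F0. \<Union>X\<in>PX. \<Union>N\<in>PN. \<Union>Q\<in>PQ W X N. E t W X N Q))"
    by (rule union_bound_pmf[OF fin(1)])
  also have "\<dots> \<le> (\<Sum>t\<in>PT. \<Sum>W\<in>F0. measure_pmf.prob P (\<Union>X\<in>PX. \<Union>N\<in>PN. \<Union>Q\<in>PQ W X N. E t W X N Q))"
    by (intro sum_mono union_bound_pmf[OF fin(2)])
  also have "\<dots> \<le> (\<Sum>t\<in>PT. \<Sum>W\<in>F0. \<Sum>X\<in>PX. measure_pmf.prob P (\<Union>N\<in>PN. \<Union>Q\<in>PQ W X N. E t W X N Q))"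
    by (intro sum_mono union_bound_pmf[OF fin(3)])
  also have "\<dots> \<le> (\<Sum>t\<in>PT. \<Sum>W\<in>F0. \<Sum>X\<in>PX. \<Sum>N\<in>PN. measure_pmf.prob P (\<Union>Q\<in>PQ W X N. E t W X N Q))"
    by (intro sum_mono union_bound_pmf[OF fin(4)])
  also have "\<dots> \<le> (\<Sum>t\<in>PT. \<Sum>W\<in>F0. \<Sum>X\<in>PX. \<Sum>N\<in>PN. \<Sum>Q\<in>PQ W X N. measure_pmf.prob P (E t W X N Q))"
    by (intro sum_mono union_bound_pmf) (rule fin(5))
  finally show ?thesis .
qed

lemma pow2_bound:
  fixes lam :: real
  assumes fin: "finite W0" "finite X" "\<forall>k\<in>{2..K}. finite (N k)" and K: "1 \<le> K"
  shows "(2 ^ card (W0 \<union> X \<union> (\<Union>j\<in>{2..K}. N j))) ^ (K - 1) * exp (- lam * (real (card X) + (\<Sum>k\<in>{2..K}. real (card (N k)))))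
      \<le> (2 ^ K) ^ card W0 * ((2 ^ K * exp (- lam)) ^ card X * (\<Prod>k\<in>{2..K}. (2 ^ K * exp (- lam)) ^ card (N k)))"
proof -
  define s where "s = card W0 + card X + (\<Sum>k\<in>{2..K}. card (N k))"
  have "card (W0 \<union> X \<union> (\<Union>j\<in>{2..K}. N j)) \<le> card (W0 \<union> X) + card (\<Union>j\<in>{2..K}. N j)"
    by (rule card_Un_le)
  also have "\<dots> \<le> card W0 + card X + (\<Sum>k\<in>{2..K}. card (N k))"
    by (intro add_mono card_Un_le card_UN_le) simp
  finally have cu: "card (W0 \<union> X \<union> (\<Union>j\<in>{2..K}. N j)) \<le> s" by (simp add: s_def)
  have "((2::real) ^ card (W0 \<union> X \<union> (\<Union>j\<in>{2..K}. N j))) ^ (K - 1) = 2 ^ (card (W0 \<union> X \<union> (\<Union>j\<in>{2..K}. N j)) * (K - 1))"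
    by (simp add: power_mult)
  also have "\<dots> \<le> 2 ^ (s * K)"
    by (rule power_increasing) (use cu in \<open>auto intro: mult_le_mono\<close>)
  also have "\<dots> = (2 ^ K) ^ card W0 * ((2 ^ K) ^ card X * (\<Prod>k\<in>{2..K}. (2 ^ K) ^ card (N k)))"
  proof -
    have e: "(2::real) ^ (K * (\<Sum>k\<in>{2..K}. card (N k))) = (\<Prod>k\<in>{2..K}. 2 ^ (K * card (N k)))"
      by (simp add: sum_distrib_left power_sum)
    have "(2::real) ^ (s * K) = 2 ^ (K * card W0) * (2 ^ (K * card X) * 2 ^ (K * (\<Sum>k\<in>{2..K}. card (N k))))"
      by (simp add: s_def power_add[symmetric] algebra_simps)
    thus ?thesis unfolding e by (simp add: power_mult)
  qed
  finally have a: "((2::real) ^ card (W0 \<union> X \<union> (\<Union>j\<in>{2..K}. N j))) ^ (K - 1)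
     \<le> (2 ^ K) ^ card W0 * ((2 ^ K) ^ card X * (\<Prod>k\<in>{2..K}. (2 ^ K) ^ card (N k)))" .
  have b: "exp (- lam * (real (card X) + (\<Sum>k\<in>{2..K}. real (card (N k)))))
      = exp (- lam) ^ card X * (\<Prod>k\<in>{2..K}. exp (- lam) ^ card (N k))"
  proof -
    have b1: "\<And>c::nat. exp (- lam * real c) = exp (- lam) ^ c"
      by (simp add: exp_of_nat_mult[symmetric] mult.commute)
    have "exp (- lam * (real (card X) + (\<Sum>k\<in>{2..K}. real (card (N k)))))
        = exp (- lam * real (card X) + (\<Sum>k\<in>{2..K}. - lam * real (card (N k))))"
      by (simp only: distrib_left sum_distrib_left)
    also have "\<dots> = exp (- lam * real (card X)) * (\<Prod>k\<in>{2..K}. exp (- lam * real (card (N k))))"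
      unfolding exp_add by (subst exp_sum) simp_all
    finally show ?thesis by (simp only: b1)
  qed
  have "(2 ^ card (W0 \<union> X \<union> (\<Union>j\<in>{2..K}. N j))) ^ (K - 1) * exp (- lam * (real (card X) + (\<Sum>k\<in>{2..K}. real (card (N k)))))
      \<le> (2 ^ K) ^ card W0 * ((2 ^ K) ^ card X * (\<Prod>k\<in>{2..K}. (2 ^ K) ^ card (N k))) *
        (exp (- lam) ^ card X * (\<Prod>k\<in>{2..K}. exp (- lam) ^ card (N k)))"
    unfolding b by (rule mult_right_mono[OF a]) (simp add: prod_nonneg)
  also have "\<dots> = (2 ^ K) ^ card W0 * ((2 ^ K * exp (- lam)) ^ card X * (\<Prod>k\<in>{2..K}. (2 ^ K * exp (- lam)) ^ card (N k)))"
    by (simp add: power_mult_distrib prod.distrib algebra_simps)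
  finally show ?thesis .
qed


lemma bad_bound:
  fixes p lam w y z nu :: real and \<rho> :: "nat \<Rightarrow> real"
  assumes n: "0 < n" and p: "0 \<le> p" "p \<le> 1" and K: "1 \<le> K"
    and lam: "\<forall>i<r. lam \<le> p * (\<Prod>i'\<in>{..<r}-{i}. \<rho> i')" and rho0: "\<forall>i<r. 0 \<le> \<rho> i"
    and w: "0 < w" "w \<le> 1" and z: "z = 2 ^ K * exp (- lam)" and zy: "z \<le> y"
    and sub: "Bad \<subseteq> (\<Union>t\<in>PiE {1..K} (\<lambda>_. {0..T}). \<Union>W0\<in>{W\<in>Pow (vertex_set n r). card W \<le> M}.
        \<Union>X\<in>Pow (vertex_set n r). \<Union>N\<in>PiE {2..K} (\<lambda>_. {N\<in>Pow (vertex_set n r). nu \<le> real (card N)}).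
        \<Union>Q\<in>PiE {2..K} (\<lambda>_. Pow (W0 \<union> X \<union> (\<Union>j\<in>{2..K}. N j))). Evv n r K \<rho> M nu t W0 X N Q)"
  shows "measure_pmf.prob (path_pmf n r p T) Bad \<le> real (T + 1) ^ K * ((2 ^ K) ^ M * ((1 + w) ^ (n * r) / w ^ M))
          * ((1 + z) ^ (n * r) * ((z / y) powr nu * (1 + y) ^ (n * r)) ^ (K - 1))"
proof -
  define V where "V = vertex_set n r"
  define PT where "PT = PiE {1..K} (\<lambda>_::nat. {0..T})"
  define F0 where "F0 = {W\<in>Pow V. card W \<le> M}"
  define PX where "PX = Pow V"
  define FN where "FN = {N\<in>Pow V. nu \<le> real (card N)}"
  define PN where "PN = PiE {2..K} (\<lambda>_::nat. FN)"
  define PQ where "PQ = (\<lambda>(W0::(nat\<times>nat) set) (X::(nat\<times>nat) set) (N::nat \<Rightarrow> (nat\<times>nat) set). PiE {2..K} (\<lambda>_::nat. Pow (W0 \<union> X \<union> (\<Union>j\<in>{2..K}. N j))))"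
  define E where "E = (\<lambda>t W0 X N Q. Evv n r K \<rho> M nu t W0 X N Q)"
  define g1 where "g1 = (\<lambda>W0::(nat\<times>nat) set. ((2::real) ^ K) ^ card W0)"
  define g2 where "g2 = (\<lambda>X::(nat\<times>nat) set. z ^ card X)"
  define g3 where "g3 = (\<lambda>N::nat \<Rightarrow> (nat\<times>nat) set. \<Prod>k\<in>{2..K}. z ^ card (N k))"
  have finV: "finite V" by (simp add: V_def)
  have cardV: "card V = n * r" by (simp add: V_def card_vertex_set)
  have finPT: "finite PT" by (simp add: PT_def finite_PiE)
  have finF0: "finite F0" using finV by (simp add: F0_def)
  have finPX: "finite PX" using finV by (simp add: PX_def)
  have finFN: "finite FN" using finV by (simp add: FN_def)
  have finPN: "finite PN" using finFN by (simp add: PN_def finite_PiE)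
  have step1: "measure_pmf.prob (path_pmf n r p T) Bad \<le>
      (\<Sum>t\<in>PT. \<Sum>W\<in>F0. \<Sum>X\<in>PX. \<Sum>N\<in>PN. \<Sum>Q\<in>PQ W X N. measure_pmf.prob (path_pmf n r p T) (E t W X N Q))"
  proof (rule nested_union_bound[OF finPT finF0 finPX finPN])
    fix W X N assume h: "W \<in> F0" "X \<in> PX" "N \<in> PN"
    have "finite W" "finite X" using h finV by (auto simp: F0_def PX_def intro: finite_subset)
    moreover have "\<forall>k\<in>{2..K}. finite (N k)" using h finV by (auto simp: PN_def FN_def intro: finite_subset)
    ultimately have "finite (W \<union> X \<union> (\<Union>j\<in>{2..K}. N j))" by auto
    thus "finite (PQ W X N)" by (simp add: PQ_def finite_PiE)
  next
    show "Bad \<subseteq> (\<Union>t\<in>PT. \<Union>W\<in>F0. \<Union>X\<in>PX. \<Union>N\<in>PN. \<Union>Q\<in>PQ W X N. E t W X N Q)"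
      using sub by (simp add: PQ_def E_def PT_def F0_def PX_def PN_def FN_def V_def)
  qed
  have step2: "(\<Sum>Q\<in>PQ W X N. measure_pmf.prob (path_pmf n r p T) (E t W X N Q)) \<le> g1 W * (g2 X * g3 N)"
    if tP: "t \<in> PT" and WF: "W \<in> F0" and XP: "X \<in> PX" and NP: "N \<in> PN" for t W X N
  proof -
    define G where "G = exp (- lam * (real (card X) + (\<Sum>k\<in>{2..K}. real (card (N k)))))"
    have tT: "\<forall>k\<in>{1..K}. t k \<le> T" using tP by (auto simp: PT_def)
    have each: "measure_pmf.prob (path_pmf n r p T) (E t W X N Q) \<le> G" for Q
    proof (cases "valid n r K \<rho> M nu W X N Q")
      case True
      thus ?thesis unfolding E_def Evv_def G_def
        using witness_prob[OF n p True tT K lam rho0] by simp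
    next
      case False thus ?thesis by (simp add: E_def Evv_def G_def)
    qed
    have finW: "finite W" "finite X" using WF XP finV by (auto simp: F0_def PX_def intro: finite_subset)
    have finN: "\<forall>k\<in>{2..K}. finite (N k)" using NP finV by (auto simp: PN_def FN_def intro: finite_subset)
    have finU: "finite (W \<union> X \<union> (\<Union>j\<in>{2..K}. N j))" using finW finN by auto
    have "(\<Sum>Q\<in>PQ W X N. measure_pmf.prob (path_pmf n r p T) (E t W X N Q)) \<le> (\<Sum>Q\<in>PQ W X N. G)"
      by (rule sum_mono) (rule each)
    also have "\<dots> = real (card (PQ W X N)) * G" by simp
    also have "card (PQ W X N) = (2 ^ card (W \<union> X \<union> (\<Union>j\<in>{2..K}. N j))) ^ (K - 1)"
      unfolding PQ_def by (simp add: card_PiE card_Pow[OF finU])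
    also have "real ((2 ^ card (W \<union> X \<union> (\<Union>j\<in>{2..K}. N j))) ^ (K - 1)) * G \<le> g1 W * (g2 X * g3 N)"
      unfolding G_def g1_def g2_def g3_def z using pow2_bound[OF finW finN K, of lam] by simp
    finally show ?thesis .
  qed
  have "(\<Sum>t\<in>PT. \<Sum>W\<in>F0. \<Sum>X\<in>PX. \<Sum>N\<in>PN. \<Sum>Q\<in>PQ W X N. measure_pmf.prob (path_pmf n r p T) (E t W X N Q))
      \<le> (\<Sum>t\<in>PT. \<Sum>W\<in>F0. \<Sum>X\<in>PX. \<Sum>N\<in>PN. g1 W * (g2 X * g3 N))"
    by (intro sum_mono step2)
  also have "\<dots> = real (card PT) * ((\<Sum>W\<in>F0. g1 W) * ((\<Sum>X\<in>PX. g2 X) * (\<Sum>N\<in>PN. g3 N)))"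
  proof -
    have i: "\<And>W. (\<Sum>X\<in>PX. \<Sum>N\<in>PN. g1 W * (g2 X * g3 N)) = g1 W * ((\<Sum>X\<in>PX. g2 X) * (\<Sum>N\<in>PN. g3 N))"
      unfolding sum_product by (simp add: sum_distrib_left)
    have ii: "(\<Sum>W\<in>F0. g1 W * ((\<Sum>X\<in>PX. g2 X) * (\<Sum>N\<in>PN. g3 N))) = (\<Sum>W\<in>F0. g1 W) * ((\<Sum>X\<in>PX. g2 X) * (\<Sum>N\<in>PN. g3 N))"
      by (simp only: sum_distrib_right)
    show ?thesis unfolding i ii by simp
  qed
  also have "\<dots> \<le> real (T + 1) ^ K * ((2 ^ K) ^ M * ((1 + w) ^ (n * r) / w ^ M))
          * ((1 + z) ^ (n * r) * ((z / y) powr nu * (1 + y) ^ (n * r)) ^ (K - 1))"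
  proof -
    have zpos: "0 < z" using z by simp
    have c1: "real (card PT) = real (T + 1) ^ K" by (simp add: PT_def card_PiE)
    have c2: "(\<Sum>W\<in>F0. g1 W) \<le> (2 ^ K) ^ M * ((1 + w) ^ (n * r) / w ^ M)"
    proof -
      have "(\<Sum>W\<in>F0. g1 W) \<le> (\<Sum>W\<in>F0. (2 ^ K) ^ M)"
        by (rule sum_mono) (auto simp: g1_def F0_def intro: power_increasing)
      also have "\<dots> = real (card F0) * (2 ^ K) ^ M" by simp
      also have "\<dots> \<le> ((1 + w) ^ (n * r) / w ^ M) * (2 ^ K) ^ M"
        by (rule mult_right_mono) (use card_small_family[OF finV w, of M] cardV in \<open>auto simp: F0_def\<close>)
      finally show ?thesis by (simp add: mult.commute)
    qed
    have c3: "(\<Sum>X\<in>PX. g2 X) = (1 + z) ^ (n * r)"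
      unfolding PX_def g2_def using sum_pow_card_Pow[OF finV] cardV by simp
    have c4: "(\<Sum>N\<in>PN. g3 N) \<le> ((z / y) powr nu * (1 + y) ^ (n * r)) ^ (K - 1)"
    proof -
      have "(\<Sum>N\<in>PN. g3 N) = (\<Prod>k\<in>{2..K}. \<Sum>N\<in>FN. z ^ card N)"
        unfolding PN_def g3_def by (rule prod_sum_PiE[symmetric]) (use finFN in auto)
      also have "\<dots> \<le> (\<Prod>k\<in>{2..K}. (z / y) powr nu * (1 + y) ^ (n * r))"
        by (rule prod_mono) (use gf_large[OF finV zpos zy, of nu] cardV zpos in \<open>auto simp: FN_def intro!: sum_nonneg\<close>)
      also have "\<dots> = ((z / y) powr nu * (1 + y) ^ (n * r)) ^ (K - 1)" by simp
      finally show ?thesis .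
    qed
    have nn1: "0 \<le> (\<Sum>W\<in>F0. g1 W)" "0 \<le> (\<Sum>X\<in>PX. g2 X)" "0 \<le> (\<Sum>N\<in>PN. g3 N)"
      using zpos by (auto simp: g1_def g2_def g3_def intro!: sum_nonneg prod_nonneg)
    define B1 where "B1 = ((2::real) ^ K) ^ M * ((1 + w) ^ (n * r) / w ^ M)"
    define B3 where "B3 = ((z / y) powr nu * (1 + y) ^ (n * r)) ^ (K - 1)"
    have B1: "0 \<le> B1" using w by (simp add: B1_def)
    have h1: "(\<Sum>X\<in>PX. g2 X) * (\<Sum>N\<in>PN. g3 N) \<le> (\<Sum>X\<in>PX. g2 X) * B3"
      using c4 nn1 by (simp add: B3_def mult_left_mono)
    have h2: "(\<Sum>W\<in>F0. g1 W) \<le> B1" using c2 by (simp add: B1_def)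
    have "(\<Sum>W\<in>F0. g1 W) * ((\<Sum>X\<in>PX. g2 X) * (\<Sum>N\<in>PN. g3 N)) \<le> B1 * ((\<Sum>X\<in>PX. g2 X) * B3)"
      using mult_mono[OF h2 h1 B1 mult_nonneg_nonneg[OF nn1(2) nn1(3)]] .
    hence "real (card PT) * ((\<Sum>W\<in>F0. g1 W) * ((\<Sum>X\<in>PX. g2 X) * (\<Sum>N\<in>PN. g3 N)))
        \<le> real (card PT) * (B1 * ((\<Sum>X\<in>PX. g2 X) * B3))"
      by (rule mult_left_mono) simp
    thus ?thesis unfolding c1 c3 B1_def B3_def by (simp add: mult.assoc)
  qed
  finally show ?thesis using step1 by linarith
qed


lemma exp_sq: "0 \<le> x \<Longrightarrow> x ^ 2 / 4 \<le> exp (x::real)"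
proof -
  assume x: "0 \<le> x"
  have "x / 2 \<le> exp (x / 2)" using exp_ge_add_one_self[of "x/2"] by linarith
  hence "(x / 2) ^ 2 \<le> exp (x / 2) ^ 2" using x by (intro power_mono) auto
  also have "exp (x / 2) ^ 2 = exp x" by (simp add: exp_double[symmetric])
  finally show ?thesis by (simp add: power_divide)
qed

lemma ln_le_2sqrt: "0 < x \<Longrightarrow> ln x \<le> 2 * sqrt (x::real)"
proof -
  assume x: "0 < x"
  have "ln (sqrt x) \<le> sqrt x - 1" using x by (intro ln_le_minus_one) simp
  moreover have "ln x = 2 * ln (sqrt x)" using x by (simp add: ln_sqrt)
  ultimately show ?thesis by linarith
qed

lemma nat_ceil_le: "0 \<le> x \<Longrightarrow> real (nat \<lceil>x\<rceil>) \<le> x + 1"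
  by linarith

lemma pow_le_exp: "0 \<le> x \<Longrightarrow> (1 + x) ^ k \<le> exp (real k * (x::real))"
proof -
  assume x: "0 \<le> x"
  have "(1 + x) ^ k \<le> exp x ^ k" by (rule power_mono) (use x exp_ge_add_one_self[of x] in auto)
  thus ?thesis by (simp add: exp_of_nat_mult)
qed

lemma lam_cond:
  fixes \<gamma> :: "nat \<Rightarrow> real" and \<epsilon> d G \<Psi> Xd :: real
  assumes r: "2 \<le> r" and g: "\<forall>i<r. 0 < \<gamma> i" and G: "\<forall>i<r. \<gamma> i \<le> G"
    and Xd: "0 < Xd" "Xd = G * ln d / (d * real r ^ (r - 1) * (real r - 1) * (\<Prod>i<r. \<gamma> i))"
    and Psi: "\<Psi> = Xd powr (1 / (real r - 1))"
    and d: "1 < d" and n: "0 < n" and i: "i < r" and eps: "0 \<le> \<epsilon>"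
  shows "(1 + \<epsilon> / 2) ^ (r - 1) * (ln d / (real r - 1))
     \<le> (d / real n ^ (r - 1)) * (\<Prod>i'\<in>{..<r}-{i}. (1 + \<epsilon> / 2) * \<gamma> i' * real r * real n * \<Psi>)"
proof -
  define P where "P = (\<Prod>i'\<in>{..<r}-{i}. \<gamma> i')"
  have Ppos: "0 < P" unfolding P_def using g by (intro prod_pos) auto
  have Pall: "(\<Prod>i<r. \<gamma> i) = \<gamma> i * P"
    unfolding P_def using i by (subst prod.remove[of "{..<r}" i]) auto
  have gi: "0 < \<gamma> i" "\<gamma> i \<le> G" using g G i by auto
  have card: "card ({..<r}-{i}) = r - 1" using i by simp
  have r1: "real r - 1 > 0" using r by simp
  have r1': "real (r - 1) = real r - 1" using r by simp
  have PsiX: "\<Psi> ^ (r - 1) = Xd"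
  proof -
    have "\<Psi> ^ (r - 1) = \<Psi> powr real (r - 1)"
      using Xd(1) by (simp add: Psi powr_realpow)
    also have "\<dots> = Xd powr (1 / (real r - 1) * real (r - 1))" unfolding Psi by (simp add: powr_powr)
    also have "1 / (real r - 1) * real (r - 1) = 1" using r1 r1' by simp
    finally show ?thesis using Xd(1) by simp
  qed
  have "(\<Prod>i'\<in>{..<r}-{i}. (1 + \<epsilon> / 2) * \<gamma> i' * real r * real n * \<Psi>)
      = (\<Prod>i'\<in>{..<r}-{i}. ((1 + \<epsilon> / 2) * real r * real n * \<Psi>) * \<gamma> i')"
    by (rule prod.cong) (simp_all add: algebra_simps)
  also have "\<dots> = ((1 + \<epsilon> / 2) * real r * real n * \<Psi>) ^ (r - 1) * P"
    by (simp add: prod.distrib card P_def)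
  also have "\<dots> = (1 + \<epsilon> / 2) ^ (r - 1) * real r ^ (r - 1) * real n ^ (r - 1) * Xd * P"
    by (simp only: power_mult_distrib PsiX)
  finally have prodeq: "(\<Prod>i'\<in>{..<r}-{i}. (1 + \<epsilon> / 2) * \<gamma> i' * real r * real n * \<Psi>)
      = (1 + \<epsilon> / 2) ^ (r - 1) * real r ^ (r - 1) * real n ^ (r - 1) * Xd * P" .
  have npos: "real n ^ (r - 1) > 0" using n by simp
  have rpos: "real r ^ (r - 1) > 0" using r by simp
  have dpos: "d > 0" using d by simp
  define B where "B = (1 + \<epsilon> / 2) ^ (r - 1)"
  have Bpos: "B > 0" using eps by (simp add: B_def)
  have e1: "(d / real n ^ (r - 1)) * (B * real r ^ (r - 1) * real n ^ (r - 1) * Xd * P)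
      = B * (d * real r ^ (r - 1) * Xd) * P"
    using npos n by (simp add: field_simps)
  have e2: "d * real r ^ (r - 1) * Xd = G * ln d / ((real r - 1) * (\<gamma> i * P))"
    using dpos rpos r1 Ppos gi unfolding Xd(2) Pall by (simp add: field_simps)
  have e3: "B * (G * ln d / ((real r - 1) * (\<gamma> i * P))) * P = B * (G / \<gamma> i) * (ln d / (real r - 1))"
    using Ppos gi r1 by (simp add: field_simps)
  have eq2: "(d / real n ^ (r - 1)) * (B * real r ^ (r - 1) * real n ^ (r - 1) * Xd * P)
      = B * (G / \<gamma> i) * (ln d / (real r - 1))"
    using e1 e2 e3 by simp
  have "1 \<le> G / \<gamma> i" using gi by simp
  moreover have "0 \<le> ln d / (real r - 1)" using d r1 by simp
  ultimately have "1 * (ln d / (real r - 1)) \<le> (G / \<gamma> i) * (ln d / (real r - 1))"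
    by (rule mult_right_mono)
  hence "B * (ln d / (real r - 1)) \<le> B * ((G / \<gamma> i) * (ln d / (real r - 1)))"
    using Bpos by (intro mult_left_mono) auto
  hence "B * (ln d / (real r - 1)) \<le> B * (G / \<gamma> i) * (ln d / (real r - 1))"
    by (simp only: mult.assoc)
  thus ?thesis unfolding prodeq using eq2 by (simp add: B_def)
qed


lemma final_bound:
  fixes \<Psi> L \<beta> \<beta>' eps eps' y z nulo :: real and K M n r T :: nat
  assumes Psi: "0 < \<Psi>" "\<Psi> \<le> 1" and lnPsi: "- ln \<Psi> \<le> L" and L0: "0 \<le> L"
    and K: "2 \<le> K" and eps: "0 < eps" "0 < eps'"
    and M: "real M \<le> (1 + eps) * real r * real n * \<Psi> + real r"
    and y: "y = exp (- \<beta>' * L)" and z: "z = 2 ^ K * exp (- \<beta> * L)" and bb: "\<beta>' \<le> \<beta>"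
    and yPsi: "real r * (2 ^ K + real K) * y \<le> \<Psi> / 2"
    and Kc: "(1 + eps) * real r + 1 \<le> (real K - 1) * (eps' / 4) * (\<beta> - \<beta>')"
    and LA: "(1 + eps) * real r * real K * ln 2 + real r + (real K - 1) * (eps' / 4) * real K * ln 2 + 1 \<le> L"
    and nc: "real K * ln (real T + 1) + real r * (real K * ln 2 + L) \<le> real n * \<Psi> / 4"
    and nulo: "nulo = eps' * real n * \<Psi> / 4"
  shows "real (T + 1) ^ K * ((2 ^ K) ^ M * ((1 + \<Psi>) ^ (n * r) / \<Psi> ^ M))
          * ((1 + z) ^ (n * r) * ((z / y) powr nulo * (1 + y) ^ (n * r)) ^ (K - 1))
         \<le> exp (- (\<Psi> / 4) * real n)"
proof -
  define l where "l = - ln \<Psi>"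
  have l0: "0 \<le> l" using Psi by (simp add: l_def)
  have ypos: "0 < y" and zpos: "0 < z" using y z by auto
  define lzy where "lzy = real K * ln 2 - (\<beta> - \<beta>') * L"
  have lzy: "ln (z / y) = lzy"
  proof -
    have ex: "exp (- \<beta> * L) / exp (- \<beta>' * L) = exp (- ((\<beta> - \<beta>') * L))"
      by (subst exp_diff[symmetric]) (simp add: algebra_simps)
    have "z / y = 2 ^ K * exp (- ((\<beta> - \<beta>') * L))"
      unfolding y z ex[symmetric] by simp
    thus ?thesis by (simp add: lzy_def ln_mult ln_realpow)
  qed
  define nr where "nr = real (n * r)"
  have nr0: "0 \<le> nr" by (simp add: nr_def)
  have f1: "real (T + 1) ^ K = exp (real K * ln (real T + 1))"
  proof -
    have "exp (real K * ln (real T + 1)) = exp (ln (real T + 1)) ^ K" by (simp only: exp_of_nat_mult)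
    thus ?thesis by (simp add: add.commute)
  qed
  have f2: "((2::real) ^ K) ^ M = exp (real K * real M * ln 2)"
  proof -
    have "((2::real) ^ K) ^ M = exp (ln 2) ^ (K * M)" by (simp add: power_mult)
    also have "\<dots> = exp (real (K * M) * ln 2)" by (simp only: exp_of_nat_mult)
    finally show ?thesis by (simp add: mult.commute)
  qed
  have f3: "(1 + \<Psi>) ^ (n * r) \<le> exp (nr * \<Psi>)"
    unfolding nr_def by (rule pow_le_exp) (use Psi in simp)
  have f4: "1 / \<Psi> ^ M = exp (real M * l)"
  proof -
    have "\<Psi> ^ M = exp (ln \<Psi>) ^ M" using Psi by simp
    also have "\<dots> = exp (real M * ln \<Psi>)" by (simp only: exp_of_nat_mult)
    moreover have "exp (real M * l) = inverse (exp (real M * ln \<Psi>))" by (simp add: l_def exp_minus[symmetric])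
    ultimately show ?thesis by (simp add: divide_inverse)
  qed
  have f5: "(1 + z) ^ (n * r) \<le> exp (nr * z)"
    unfolding nr_def by (rule pow_le_exp) (use zpos in simp)
  have f6: "(z / y) powr nulo = exp (nulo * lzy)"
    using zpos ypos by (simp add: powr_def lzy mult.commute)
  have f7: "(1 + y) ^ (n * r) \<le> exp (nr * y)"
    unfolding nr_def by (rule pow_le_exp) (use ypos in simp)
  have g1: "(1 + \<Psi>) ^ (n * r) / \<Psi> ^ M \<le> exp (nr * \<Psi>) * exp (real M * l)"
  proof -
    have "(1 + \<Psi>) ^ (n * r) / \<Psi> ^ M = (1 + \<Psi>) ^ (n * r) * (1 / \<Psi> ^ M)" by simp
    also have "\<dots> \<le> exp (nr * \<Psi>) * (1 / \<Psi> ^ M)"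
      by (rule mult_right_mono[OF f3]) (use Psi in simp)
    finally show ?thesis unfolding f4 .
  qed
  have g2: "(z / y) powr nulo * (1 + y) ^ (n * r) \<le> exp (nulo * lzy + nr * y)"
    unfolding f6 exp_add by (rule mult_left_mono[OF f7]) simp
  have g3: "((z / y) powr nulo * (1 + y) ^ (n * r)) ^ (K - 1) \<le> exp (real (K - 1) * (nulo * lzy + nr * y))"
  proof -
    have "((z / y) powr nulo * (1 + y) ^ (n * r)) ^ (K - 1) \<le> exp (nulo * lzy + nr * y) ^ (K - 1)"
      by (rule power_mono[OF g2]) (use ypos in simp)
    thus ?thesis by (simp only: exp_of_nat_mult)
  qed
  define E where "E = real K * ln (real T + 1) + (real K * real M * ln 2 + (nr * \<Psi> + real M * l))
      + (nr * z + real (K - 1) * (nulo * lzy + nr * y))"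
  have bound: "real (T + 1) ^ K * ((2 ^ K) ^ M * ((1 + \<Psi>) ^ (n * r) / \<Psi> ^ M))
          * ((1 + z) ^ (n * r) * ((z / y) powr nulo * (1 + y) ^ (n * r)) ^ (K - 1)) \<le> exp E"
  proof -
    have B: "(1 + z) ^ (n * r) * ((z / y) powr nulo * (1 + y) ^ (n * r)) ^ (K - 1)
        \<le> exp (nr * z) * exp (real (K - 1) * (nulo * lzy + nr * y))"
      by (rule mult_mono[OF f5 g3]) (use zpos ypos in auto)
    have A': "((2::real) ^ K) ^ M * ((1 + \<Psi>) ^ (n * r) / \<Psi> ^ M) \<le> exp (real K * real M * ln 2) * (exp (nr * \<Psi>) * exp (real M * l))"
      unfolding f2 by (rule mult_left_mono[OF g1]) simp
    have "real (T + 1) ^ K * (((2::real) ^ K) ^ M * ((1 + \<Psi>) ^ (n * r) / \<Psi> ^ M))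
          * ((1 + z) ^ (n * r) * ((z / y) powr nulo * (1 + y) ^ (n * r)) ^ (K - 1))
        \<le> exp (real K * ln (real T + 1)) * (exp (real K * real M * ln 2) * (exp (nr * \<Psi>) * exp (real M * l)))
          * (exp (nr * z) * exp (real (K - 1) * (nulo * lzy + nr * y)))"
      unfolding f1 by (intro mult_mono mult_left_mono A' B) (use Psi zpos ypos in auto)
    also have "\<dots> = exp E" by (simp add: E_def exp_add)
    finally show ?thesis .
  qed
  define u where "u = real n * \<Psi>"
  define v where "v = u * L"
  define a1 where "a1 = (1 + eps) * real r * real K * ln 2"
  define a2 where "a2 = (1 + eps) * real r"
  define a3 where "a3 = (real K - 1) * (eps' / 4) * real K * ln 2"
  define H where "H = real r * (real K * ln 2 + L)"
  define tK where "tK = real K * ln (real T + 1)"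
  have u0: "0 \<le> u" using Psi by (simp add: u_def)
  have K1: "real (K - 1) = real K - 1" using K by simp
  have k2: "0 \<le> real K * ln 2" by simp
  have a: "real K * real M * ln 2 + real M * l \<le> a1 * u + a2 * v + H"
  proof -
    have "real K * real M * ln 2 + real M * l = real M * (real K * ln 2 + l)" by (simp add: algebra_simps)
    also have "\<dots> \<le> (a2 * u + real r) * (real K * ln 2 + L)"
    proof -
      have m1: "real M \<le> a2 * u + real r" using M by (simp add: a2_def u_def mult.assoc)
      have m2: "real K * ln 2 + l \<le> real K * ln 2 + L" using lnPsi by (simp add: l_def)
      have m3: "0 \<le> a2 * u + real r" using u0 eps by (simp add: a2_def)
      have m4: "0 \<le> real K * ln 2 + l" using l0 k2 by linarith
      show ?thesis by (rule mult_mono[OF m1 m2 m3 m4])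
    qed
    also have "\<dots> = a1 * u + a2 * v + H" by (simp add: a1_def a2_def v_def H_def algebra_simps)
    finally show ?thesis .
  qed
  have b: "nr * z + real (K - 1) * (nr * y) \<le> u / 2"
  proof -
    have "exp (- \<beta> * L) \<le> exp (- \<beta>' * L)" using bb L0 by (simp add: mult_right_mono)
    hence zy: "z \<le> 2 ^ K * y" unfolding z y by simp
    have "nr * z + real (K - 1) * (nr * y) \<le> nr * (2 ^ K * y) + real K * (nr * y)"
      by (intro add_mono mult_left_mono mult_right_mono zy) (use nr0 ypos in auto)
    also have "\<dots> = real n * (real r * (2 ^ K + real K) * y)" by (simp add: nr_def algebra_simps)
    also have "\<dots> \<le> real n * (\<Psi> / 2)" by (rule mult_left_mono[OF yPsi]) simp
    finally show ?thesis by (simp add: u_def)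
  qed
  have c: "real (K - 1) * (nulo * lzy) \<le> a3 * u - a2 * v - v"
  proof -
    have "real (K - 1) * (nulo * lzy) = a3 * u - ((real K - 1) * (eps' / 4) * (\<beta> - \<beta>')) * v"
      unfolding K1 nulo lzy_def a3_def u_def v_def by (simp add: field_simps)
    also have "((real K - 1) * (eps' / 4) * (\<beta> - \<beta>')) * v \<ge> ((1 + eps) * real r + 1) * v"
      by (rule mult_right_mono[OF Kc]) (use u0 L0 in \<open>simp add: v_def\<close>)
    hence "a3 * u - ((real K - 1) * (eps' / 4) * (\<beta> - \<beta>')) * v \<le> a3 * u - ((1 + eps) * real r + 1) * v" by simp
    also have "\<dots> = a3 * u - a2 * v - v" by (simp add: a2_def algebra_simps)
    finally show ?thesis .
  qed
  have d: "a1 * u + real r * u + a3 * u + u \<le> v"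
  proof -
    have "(a1 + real r + a3 + 1) * u \<le> L * u"
      by (rule mult_right_mono) (use LA u0 in \<open>auto simp: a1_def a3_def\<close>)
    thus ?thesis by (simp add: v_def algebra_simps)
  qed
  have e: "nr * \<Psi> = real r * u" by (simp add: nr_def u_def)
  have E_le: "E \<le> tK + H - u / 2"
  proof -
    have "E = tK + (real K * real M * ln 2 + real M * l) + nr * \<Psi> + (nr * z + real (K - 1) * (nr * y)) + real (K - 1) * (nulo * lzy)"
      by (simp add: E_def tK_def algebra_simps)
    thus ?thesis using a b c d e by linarith
  qed
  have "tK + H \<le> u / 4" using nc by (simp add: tK_def H_def u_def)
  moreover have "- (\<Psi> / 4) * real n = - (u / 4)" by (simp add: u_def)
  ultimately have "E \<le> - (\<Psi> / 4) * real n" using E_le by linarith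
  thus ?thesis using bound by (meson exp_le_cancel_iff order_trans)
qed


theorem mainTheorem18:
  fixes r :: nat and \<epsilon> :: real and \<gamma> :: "nat \<Rightarrow> real"
  assumes "r \<ge> 2" and "\<epsilon> > 0"
    and "\<forall>i<r. 0 < \<gamma> i \<and> \<gamma> i < 1"
    and "(\<Sum>i<r. \<gamma> i) = 1"
  shows "\<exists>K0::nat. \<forall>K\<ge>K0. \<exists>d0::real. \<forall>d\<ge>d0. \<forall>a::real. a > 0 \<longrightarrow>
           (\<exists>c>0. \<exists>N::nat. \<forall>n\<ge>N. \<forall>T::nat. real T \<le> real n powr a \<longrightarrow>
              measure_pmf.prob (path_pmf n r (d / real n ^ (r - 1)) T)
                {(A0, B). bad_sequence_exists n r \<epsilon> \<gamma> K d T A0 B}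
              \<le> exp (- c * real n))"
proof -
  have r2: "2 \<le> r" and eps: "0 < \<epsilon>" and gam: "\<forall>i<r. 0 < \<gamma> i \<and> \<gamma> i < 1"
    and gsum: "(\<Sum>i<r. \<gamma> i) = 1" using assms by auto
  define gmax where "gmax = Max (\<gamma> ` {0..<r})"
  define gmin where "gmin = Min (\<gamma> ` {0..<r})"
  have finG: "finite (\<gamma> ` {0..<r})" and neG: "\<gamma> ` {0..<r} \<noteq> {}" using r2 by auto
  have gmax_ge: "\<forall>i<r. \<gamma> i \<le> gmax" unfolding gmax_def using finG by auto
  have gmin_le: "\<forall>i<r. gmin \<le> \<gamma> i" unfolding gmin_def using finG by auto
  have gmin_pos: "0 < gmin"
  proof -
    have "gmin \<in> \<gamma> ` {0..<r}" unfolding gmin_def using finG neG by (rule Min_in)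
    thus ?thesis using gam by auto
  qed
  have r1: "real r - 1 > 0" using r2 by simp
  define e' where "e' = \<epsilon> * gmin"
  have e'pos: "0 < e'" using eps gmin_pos by (simp add: e'_def)
  define \<beta> where "\<beta> = (1 + \<epsilon> / 2) ^ (r - 1)"
  have \<beta>1: "1 < \<beta>" unfolding \<beta>_def by (rule one_less_power) (use eps r2 in auto)
  define \<beta>' where "\<beta>' = (1 + \<beta>) / 2"
  define \<delta> where "\<delta> = \<beta> - \<beta>'"
  have \<delta>pos: "0 < \<delta>" using \<beta>1 by (simp add: \<delta>_def \<beta>'_def)
  have \<beta>'1: "0 < \<beta>' - 1" using \<beta>1 by (simp add: \<beta>'_def)
  have bb: "\<beta>' \<le> \<beta>" using \<delta>pos by (simp add: \<delta>_def)
  define cK where "cK = ((1 + \<epsilon>) * real r + 1) / ((e' / 4) * \<delta>)"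
  define K0 :: nat where "K0 = nat \<lceil>cK\<rceil> + 2"
  show ?thesis
  proof (rule exI[of _ K0], intro allI impI)
    fix K assume KK0: "K0 \<le> K"
    have K2: "2 \<le> K" using KK0 by (simp add: K0_def)
    have Kc: "(1 + \<epsilon>) * real r + 1 \<le> (real K - 1) * (e' / 4) * (\<beta> - \<beta>')"
    proof -
      have "cK \<le> real K - 1" using KK0 unfolding K0_def by linarith
      hence "cK * ((e' / 4) * \<delta>) \<le> (real K - 1) * ((e' / 4) * \<delta>)"
        by (rule mult_right_mono) (use e'pos \<delta>pos in simp)
      moreover have "cK * ((e' / 4) * \<delta>) = (1 + \<epsilon>) * real r + 1"
        unfolding cK_def using e'pos \<delta>pos by simp
      ultimately have "(1 + \<epsilon>) * real r + 1 \<le> (real K - 1) * ((e' / 4) * \<delta>)" by linarith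
      thus ?thesis by (simp only: \<delta>_def mult.assoc)
    qed
    define Pg where "Pg = (\<Prod>i<r. \<gamma> i)"
    have Pgpos: "0 < Pg" unfolding Pg_def using gam by (intro prod_pos) auto
    define C where "C = gmax / (real r ^ (r - 1) * (real r - 1) * Pg)"
    have gmaxpos: "0 < gmax" using gmax_ge gmin_le gmin_pos r2 by (meson order_less_le_trans zero_less_iff_neq_zero not_numeral_le_zero le_zero_eq less_2_cases_iff linorder_not_le)
    have Cpos: "0 < C" unfolding C_def using gmaxpos r1 Pgpos by simp
    define A0 where "A0 = (1 + \<epsilon>) * real r * real K * ln 2 + real r + (real K - 1) * (e' / 4) * real K * ln 2"
    define D1 where "D1 = max (max 1 (1 / C)) (max (4 * C) (max ((real r - 1) * (A0 + 1))
                 (max ((real r - 1) * (2 * real r * (2 ^ K + real K)) / (\<beta>' - 1))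
                      ((real r - 1) * (real K * ln 2) / \<delta>))))"
    show "\<exists>d0::real. \<forall>d\<ge>d0. \<forall>a::real. a > 0 \<longrightarrow>
           (\<exists>c>0. \<exists>N::nat. \<forall>n\<ge>N. \<forall>T::nat. real T \<le> real n powr a \<longrightarrow>
              measure_pmf.prob (path_pmf n r (d / real n ^ (r - 1)) T)
                {(A0, B). bad_sequence_exists n r \<epsilon> \<gamma> K d T A0 B}
              \<le> exp (- c * real n))"
    proof (rule exI[of _ "exp D1"], intro allI impI)
      fix d a :: real assume dd0: "exp D1 \<le> d" and a: "0 < a"
      have dpos: "0 < d" using dd0 by (meson exp_gt_zero order_less_le_trans)
      have lnd: "D1 \<le> ln d" using dd0 dpos by (metis exp_le_cancel_iff exp_ln)
      have lnd1: "1 \<le> ln d" and lndC: "1 / C \<le> ln d" and lnd4C: "4 * C \<le> ln d"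
        and lndA: "(real r - 1) * (A0 + 1) \<le> ln d"
        and lndy: "(real r - 1) * (2 * real r * (2 ^ K + real K)) / (\<beta>' - 1) \<le> ln d"
        and lndz: "(real r - 1) * (real K * ln 2) / \<delta> \<le> ln d"
        using lnd unfolding D1_def by linarith+
      have d1: "1 < d" using lnd1 dpos by (metis exp_ln less_le_trans ln_one not_one_le_zero not_le ln_less_cancel_iff)
      define L where "L = ln d / (real r - 1)"
      have L0: "0 \<le> L" using lnd1 r1 by (simp add: L_def)
      define Xd where "Xd = gmax * ln d / (d * real r ^ (r - 1) * (real r - 1) * (\<Prod>i<r. \<gamma> i))"
      have XdC: "Xd = C * ln d / d" unfolding Xd_def C_def Pg_def using dpos by (simp add: field_simps)
      have Cl1: "1 \<le> C * ln d" using lndC Cpos by (simp add: divide_le_eq mult.commute)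
      have Xdpos: "0 < Xd" unfolding XdC using Cl1 dpos by simp
      have Xd_ge: "1 / d \<le> Xd" unfolding XdC using Cl1 dpos by (simp add: divide_right_mono)
      have Xd_le: "Xd \<le> 1"
      proof -
        have "C * ln d \<le> ln d ^ 2 / 4"
        proof -
          have "C * ln d \<le> (ln d / 4) * ln d" by (rule mult_right_mono) (use lnd4C lnd1 in auto)
          thus ?thesis by (simp add: power2_eq_square)
        qed
        also have "\<dots> \<le> exp (ln d)" by (rule exp_sq) (use lnd1 in simp)
        also have "\<dots> = d" using dpos by simp
        finally show ?thesis unfolding XdC using dpos by simp
      qed
      define \<Psi> where "\<Psi> = Psi r \<gamma> d"
      have PsiX: "\<Psi> = Xd powr (1 / (real r - 1))" by (simp add: \<Psi>_def Psi_def Xd_def gmax_def)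
      have Psipos: "0 < \<Psi>" using Xdpos by (simp add: PsiX)
      have Psi1: "\<Psi> \<le> 1" unfolding PsiX using powr_mono2[of "1 / (real r - 1)" Xd 1] Xdpos Xd_le r1 by simp
      have lnPsi: "ln \<Psi> = ln Xd / (real r - 1)" using Xdpos by (simp add: PsiX ln_powr)
      have lnXd: "- ln d \<le> ln Xd"
      proof -
        have "ln (1 / d) \<le> ln Xd" using Xd_ge dpos Xdpos by simp
        thus ?thesis using dpos by (simp add: ln_div)
      qed
      have mlnPsi: "- ln \<Psi> \<le> L"
      proof -
        have "(- ln Xd) / (real r - 1) \<le> ln d / (real r - 1)"
          by (rule divide_right_mono) (use lnXd r1 in auto)
        thus ?thesis unfolding lnPsi L_def by simp
      qed
      have Psi_exp: "exp (- L) \<le> \<Psi>" using mlnPsi Psipos by (metis exp_le_cancel_iff exp_ln neg_le_iff_le minus_minus)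
      define lam where "lam = \<beta> * L"
      define y where "y = exp (- \<beta>' * L)"
      define z where "z = 2 ^ K * exp (- lam)"
      have LA: "A0 + 1 \<le> L" using lndA r1 by (simp add: L_def le_divide_eq mult.commute)
      have yPsi: "real r * (2 ^ K + real K) * y \<le> \<Psi> / 2"
      proof -
        have t: "2 * real r * (2 ^ K + real K) \<le> (\<beta>' - 1) * L"
          using lndy r1 \<beta>'1 by (simp add: L_def field_simps)
        have ey: "y = exp (- L) / exp ((\<beta>' - 1) * L)"
          by (simp add: y_def exp_diff[symmetric] algebra_simps)
        have "(\<beta>' - 1) * L \<le> exp ((\<beta>' - 1) * L)" using exp_ge_add_one_self[of "(\<beta>' - 1) * L"] by linarith
        hence "2 * real r * (2 ^ K + real K) \<le> exp ((\<beta>' - 1) * L)" using t by linarith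
        hence h: "2 * (real r * (2 ^ K + real K)) * exp (- L) \<le> exp ((\<beta>' - 1) * L) * exp (- L)"
          by (intro mult_right_mono) auto
        have Wp: "0 < exp ((\<beta>' - 1) * L)" by simp
        have "real r * (2 ^ K + real K) * y = (2 * (real r * (2 ^ K + real K)) * exp (- L)) / exp ((\<beta>' - 1) * L) / 2"
          unfolding ey by simp
        also have "\<dots> \<le> (exp ((\<beta>' - 1) * L) * exp (- L)) / exp ((\<beta>' - 1) * L) / 2"
          by (intro divide_right_mono h) auto
        also have "\<dots> = exp (- L) / 2" using Wp by simp
        finally have "real r * (2 ^ K + real K) * y \<le> exp (- L) / 2" .
        thus ?thesis using Psi_exp by linarith
      qed
      have zy: "z \<le> y"
      proof -
        have "real K * ln 2 \<le> \<delta> * L" using lndz r1 \<delta>pos by (simp add: L_def field_simps)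
        hence "exp (real K * ln 2) \<le> exp (\<delta> * L)" by simp
        moreover have "exp (real K * ln 2) = (2::real) ^ K"
        proof -
          have "exp (real K * ln 2) = exp (ln 2) ^ K" by (simp only: exp_of_nat_mult)
          thus ?thesis by simp
        qed
        ultimately have "2 ^ K \<le> exp (\<delta> * L)" by simp
        hence "2 ^ K * exp (- lam) \<le> exp (\<delta> * L) * exp (- lam)" by simp
        also have "\<dots> = y" by (simp add: y_def lam_def \<delta>_def exp_add[symmetric] algebra_simps)
        finally show ?thesis by (simp add: z_def)
      qed
      define H where "H = real r * (real K * ln 2 + L)"
      define N :: nat where "N = nat \<lceil>max d (max (8 * (real K * ln 2 + H) / \<Psi>) ((16 * a * real K / \<Psi>) ^ 2))\<rceil> + 1"
      show "\<exists>c>0. \<exists>N::nat. \<forall>n\<ge>N. \<forall>T::nat. real T \<le> real n powr a \<longrightarrow>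
              measure_pmf.prob (path_pmf n r (d / real n ^ (r - 1)) T)
                {(A0, B). bad_sequence_exists n r \<epsilon> \<gamma> K d T A0 B}
              \<le> exp (- c * real n)"
      proof (intro exI[of _ "\<Psi> / 4"] conjI exI[of _ N] allI impI)
        show "0 < \<Psi> / 4" using Psipos by simp
        fix n T assume nN: "N \<le> n" and Ta: "real T \<le> real n powr a"
        have nd: "d \<le> real n" and n8: "8 * (real K * ln 2 + H) / \<Psi> \<le> real n"
          and n16: "(16 * a * real K / \<Psi>) ^ 2 \<le> real n"
          using nN unfolding N_def by linarith+
        have n1: "1 \<le> real n" using nd d1 by linarith
        have npos: "0 < n" using n1 by simp
        define p where "p = d / real n ^ (r - 1)"
        have p0: "0 \<le> p" using dpos by (simp add: p_def)
        have p1: "p \<le> 1"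
        proof -
          have "real n \<le> real n ^ (r - 1)" using n1 r2 by (intro self_le_power) auto
          hence "d \<le> real n ^ (r - 1)" using nd by linarith
          thus ?thesis using npos by (simp add: p_def divide_le_eq_1)
        qed
        have nc: "real K * ln (real T + 1) + H \<le> real n * \<Psi> / 4"
        proof -
          have na: "1 \<le> real n powr a" using n1 a by (simp add: ge_one_powr_ge_zero)
          have "real T + 1 \<le> 2 * real n powr a" using Ta na by linarith
          hence "ln (real T + 1) \<le> ln (2 * real n powr a)"
            by (rule ln_mono) simp
          also have "\<dots> = ln 2 + a * ln (real n)" using n1 by (simp add: ln_mult ln_powr)
          also have "\<dots> \<le> ln 2 + a * (2 * sqrt (real n))"
            using ln_le_2sqrt[of "real n"] n1 a by (simp add: mult_left_mono)
          finally have lt: "ln (real T + 1) \<le> ln 2 + a * (2 * sqrt (real n))" .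
          have s: "16 * a * real K / \<Psi> \<le> sqrt (real n)"
            using n16 by (metis real_le_rsqrt)
          have "2 * a * real K * sqrt (real n) \<le> real n * \<Psi> / 8"
          proof -
            have "16 * a * real K \<le> sqrt (real n) * \<Psi>" using s Psipos by (simp add: divide_le_eq)
            hence "16 * a * real K * sqrt (real n) \<le> sqrt (real n) * \<Psi> * sqrt (real n)"
              by (rule mult_right_mono) simp
            also have "\<dots> = real n * \<Psi>" using n1 by (simp add: algebra_simps)
            finally show ?thesis by simp
          qed
          moreover have "real K * ln 2 + H \<le> real n * \<Psi> / 8" using n8 Psipos by (simp add: divide_le_eq mult.commute)
          moreover have "real K * ln (real T + 1) \<le> real K * (ln 2 + a * (2 * sqrt (real n)))"
            by (rule mult_left_mono[OF lt]) simp
          ultimately show ?thesis by (simp add: algebra_simps)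
        qed
        define q where "q = (\<lambda>i. (1 + \<epsilon>) * \<gamma> i * real r * real n * \<Psi>)"
        define \<rho> where "\<rho> = (\<lambda>i. (1 + \<epsilon> / 2) * \<gamma> i * real r * real n * \<Psi>)"
        define nulo where "nulo = e' / 4 * real n * \<Psi>"
        define nuhi where "nuhi = e' / 2 * real n * \<Psi>"
        define M where "M = (\<Sum>i<r. nat \<lceil>q i\<rceil>)"
        have rho0: "\<forall>i<r. 0 \<le> \<rho> i" using gam eps Psipos by (auto simp: \<rho>_def)
        have rq: "\<forall>i<r. \<rho> i \<le> q i - nuhi"
        proof (intro allI impI)
          fix i assume i: "i < r"
          have "gmin \<le> \<gamma> i * real r"
          proof -
            have "\<gamma> i \<le> \<gamma> i * real r" using gam i r2 by simp
            thus ?thesis using gmin_le i by force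
          qed
          hence "(\<epsilon> / 2 * real n * \<Psi>) * gmin \<le> (\<epsilon> / 2 * real n * \<Psi>) * (\<gamma> i * real r)"
            by (rule mult_left_mono) (use eps Psipos in simp)
          thus "\<rho> i \<le> q i - nuhi" by (simp add: \<rho>_def q_def nuhi_def e'_def algebra_simps)
        qed
        have nuhi0: "0 \<le> nuhi" using e'pos Psipos by (simp add: nuhi_def)
        have lamc: "\<forall>i<r. lam \<le> p * (\<Prod>i'\<in>{..<r}-{i}. \<rho> i')"
        proof (intro allI impI)
          fix i assume i: "i < r"
          have "(1 + \<epsilon> / 2) ^ (r - 1) * (ln d / (real r - 1))
              \<le> (d / real n ^ (r - 1)) * (\<Prod>i'\<in>{..<r}-{i}. (1 + \<epsilon> / 2) * \<gamma> i' * real r * real n * \<Psi>)"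
            by (rule lam_cond[OF r2 _ gmax_ge Xdpos Xd_def PsiX d1 npos i]) (use gam eps in auto)
          thus "lam \<le> p * (\<Prod>i'\<in>{..<r}-{i}. \<rho> i')" by (simp add: lam_def \<beta>_def L_def p_def \<rho>_def)
        qed
        define Bad where "Bad = {(A0, B). bad_sequence_exists n r \<epsilon> \<gamma> K d T A0 B}"
        have sub: "Bad \<subseteq> (\<Union>t\<in>PiE {1..K} (\<lambda>_. {0..T}). \<Union>W0\<in>{W\<in>Pow (vertex_set n r). card W \<le> M}.
            \<Union>X\<in>Pow (vertex_set n r). \<Union>N\<in>PiE {2..K} (\<lambda>_. {N\<in>Pow (vertex_set n r). nulo \<le> real (card N)}).
            \<Union>Q\<in>PiE {2..K} (\<lambda>_. Pow (W0 \<union> X \<union> (\<Union>j\<in>{2..K}. N j))). Evv n r K \<rho> M nulo t W0 X N Q)"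
        proof
          fix x assume "x \<in> Bad"
          then obtain A0 B where x: "x = (A0, B)" and bad: "bad_sequence_exists n r \<epsilon> \<gamma> K d T A0 B"
            by (auto simp: Bad_def)
          obtain S where S1: "\<forall>k\<in>{1..K}. S k \<subseteq> vertex_set n r"
            and S2: "\<forall>k\<in>{1..K}. \<exists>t\<le>T. independent_set n r (interp_path (n ^ r) A0 B t) (S k)"
            and S3: "\<forall>k\<in>{1..K}. \<forall>i<r. q i \<le> real (card (S k \<inter> part n i))"
            and S4: "\<forall>k\<in>{2..K}. nulo \<le> real (card (S k - (\<Union>j\<in>{1..<k}. S j))) \<and>
                         real (card (S k - (\<Union>j\<in>{1..<k}. S j))) \<le> nuhi"
            using bad unfolding bad_sequence_exists_def Let_def
            by (auto simp: q_def nulo_def nuhi_def e'_def gmin_def \<Psi>_def)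
          have ex: "\<exists>t\<in>PiE {1..K} (\<lambda>_. {0..T}). \<exists>W0\<in>{W\<in>Pow (vertex_set n r). card W \<le> M}.
              \<exists>X\<in>Pow (vertex_set n r). \<exists>N\<in>PiE {2..K} (\<lambda>_. {N\<in>Pow (vertex_set n r). nulo \<le> real (card N)}).
              \<exists>Q\<in>PiE {2..K} (\<lambda>_. Pow (W0 \<union> X \<union> (\<Union>j\<in>{2..K}. N j))).
                valid n r K \<rho> M nulo W0 X N Q \<and> (A0, B) \<in> Ev n r K t W0 X N Q"
            by (rule extract_witness[OF _ S1 S2 S3 S4 rq nuhi0 M_def]) (use K2 in simp)
          then obtain t W0 X N Q where h: "t \<in> PiE {1..K} (\<lambda>_. {0..T})" "W0 \<in> {W\<in>Pow (vertex_set n r). card W \<le> M}"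
            "X \<in> Pow (vertex_set n r)" "N \<in> PiE {2..K} (\<lambda>_. {N\<in>Pow (vertex_set n r). nulo \<le> real (card N)})"
            "Q \<in> PiE {2..K} (\<lambda>_. Pow (W0 \<union> X \<union> (\<Union>j\<in>{2..K}. N j)))"
            "valid n r K \<rho> M nulo W0 X N Q" "(A0, B) \<in> Ev n r K t W0 X N Q"
            by blast
          have ev: "x \<in> Evv n r K \<rho> M nulo t W0 X N Q" using h(6,7) by (simp add: Evv_def x)
          show "x \<in> (\<Union>t\<in>PiE {1..K} (\<lambda>_. {0..T}). \<Union>W0\<in>{W\<in>Pow (vertex_set n r). card W \<le> M}.
            \<Union>X\<in>Pow (vertex_set n r). \<Union>N\<in>PiE {2..K} (\<lambda>_. {N\<in>Pow (vertex_set n r). nulo \<le> real (card N)}).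
            \<Union>Q\<in>PiE {2..K} (\<lambda>_. Pow (W0 \<union> X \<union> (\<Union>j\<in>{2..K}. N j))). Evv n r K \<rho> M nulo t W0 X N Q)"
            by (rule UN_I[OF h(1)], rule UN_I[OF h(2)], rule UN_I[OF h(3)], rule UN_I[OF h(4)], rule UN_I[OF h(5)], rule ev)
        qed
        have bb1: "measure_pmf.prob (path_pmf n r p T) Bad \<le> real (T + 1) ^ K * ((2 ^ K) ^ M * ((1 + \<Psi>) ^ (n * r) / \<Psi> ^ M))
          * ((1 + z) ^ (n * r) * ((z / y) powr nulo * (1 + y) ^ (n * r)) ^ (K - 1))"
          by (rule bad_bound[OF npos p0 p1 _ lamc rho0 Psipos Psi1 z_def zy sub]) (use K2 in simp)
        have Mb: "real M \<le> (1 + \<epsilon>) * real r * real n * \<Psi> + real r"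
        proof -
          have "real M = (\<Sum>i<r. real (nat \<lceil>q i\<rceil>))" by (simp add: M_def)
          also have "\<dots> \<le> (\<Sum>i<r. q i + 1)"
            by (rule sum_mono, rule nat_ceil_le) (use gam eps Psipos in \<open>auto simp: q_def\<close>)
          also have "\<dots> = (1 + \<epsilon>) * real r * real n * \<Psi> * (\<Sum>i<r. \<gamma> i) + real r"
            by (simp add: q_def sum.distrib sum_distrib_left sum_distrib_right algebra_simps)
          finally show ?thesis using gsum by simp
        qed
        have fb: "real (T + 1) ^ K * ((2 ^ K) ^ M * ((1 + \<Psi>) ^ (n * r) / \<Psi> ^ M))
          * ((1 + z) ^ (n * r) * ((z / y) powr nulo * (1 + y) ^ (n * r)) ^ (K - 1)) \<le> exp (- (\<Psi> / 4) * real n)"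
        proof (rule final_bound[OF Psipos Psi1 mlnPsi L0 K2 eps e'pos Mb y_def _ bb yPsi Kc _ _])
          show "z = 2 ^ K * exp (- \<beta> * L)" by (simp add: z_def lam_def)
          show "(1 + \<epsilon>) * real r * real K * ln 2 + real r + (real K - 1) * (e' / 4) * real K * ln 2 + 1 \<le> L"
            using LA by (simp add: A0_def)
          show "real K * ln (real T + 1) + real r * (real K * ln 2 + L) \<le> real n * \<Psi> / 4"
            using nc by (simp add: H_def)
          show "nulo = e' * real n * \<Psi> / 4" by (simp add: nulo_def)
        qed
        show "measure_pmf.prob (path_pmf n r (d / real n ^ (r - 1)) T)
                {(A0, B). bad_sequence_exists n r \<epsilon> \<gamma> K d T A0 B} \<le> exp (- (\<Psi> / 4) * real n)"
          using bb1 fb unfolding Bad_def p_def by linarith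
      qed
    qed
  qed
qed


end
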